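(* Let $M^2:l=l(u,v)$, $(u,v)$ in a neighbourhood of the origin in $\mathbb R^2$, be a generalized torus of second type in $S^3$ with non-constant Gauss curvature, parameterized so that: $\langle l_u,l_u\rangle=\langle l_v,l_v\rangle=E(u)$ depends only on $u$, $\langle l_u,l_v\rangle=0$, $\langle l,l\rangle=1$; for the unit normal $n$ of $M^2$ in $S^3$ (unit vector orthogonal to $l,l_u,l_v$) one has $\langle l_{uu},n\rangle=1$, $\langle l_{uv},n\rangle=0$, $\langle l_{vv},n\rangle=-1$; and $l(0,0)=e_1$, $l_u(0,0)=\sqrt{E(0)}\,e_2$, $l_v(0,0)=\sqrt{E(0)}\,e_3$, $n(0,0)=e_4$, where $e_1,e_2,e_3,e_4$ is the standard orthonormal basis of $\mathbb R^4$. Put $z(u)=\ln E(u)$, $s=z(0)$, $t=z'(0)/2$, and $\beta=\sqrt{t^2+2\cosh s}$. Then $z$ is the solution of $$z''+4\sinh z=0,\qquad z(0)=s,\quad z'(0)=2t,$$ and it is given explicitly by $z(u)=\ln\dfrac{\alpha^2\cos^2 h^{-1}(u+u_0)+\sin^2h^{-1}(u+u_0)}{\alpha}$ for suitable constants $\alpha>0$ and $u_0$, where $h(x)=\sqrt{\alpha}\int_0^x\frac{d\tau}{\sqrt{\alpha^2\cos^2\tau+\sin^2\tau}}$ and $h^{-1}$ is its inverse; moreover $$l(u,v)=e^{\frac{z(u)}{2}}p(u)+\frac{e^{\frac{z(u)}{2}}}{\beta^2}\Big[\cos\beta v\,\big(e^{\frac s2}e_1+t\,e_2+e^{-\frac s2}e_4\big)+\beta\sin\beta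 v\,e_3\Big],$$ where $p(u)$ is the $\mathbb R^4$-valued solution of the linear system $$p''(u)+z'(u)p'(u)+\beta^2p(u)=0,$$ $$p(0)=\frac{1}{\beta^2}\Big[e^{-\frac s2}(t^2+e^{-s})e_1-t\,e_2-e^{-\frac s2}e_4\Big],\qquad p'(0)=-t\,e^{-\frac s2}e_1+e_2.$$
   Context: $\mathbb R^4$ carries the standard Euclidean inner product and $S^3$ is its unit sphere. A surface in $S^3$ is minimal if its mean curvature in $S^3$ (with respect to a unit normal orthogonal to the position vector and tangent plane) vanishes. Principal lines are the lines of curvature of the surface in $S^3$. A circle is a curve in $\mathbb R^4$ with constant first Frenet curvature and vanishing higher Frenet curvatures. A generalized torus of second type is a minimal surface in $S^3$ on which one of the families of principal lines is a family of circles. (In the parameterization of the claim the $v$-lines are the circles.) *)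

theory Defs
  imports "HOL-Analysis.Analysis"
begin

text \<open>Standard orthonormal basis e1,e2,e3,e4 of R^4 (index type 4 = {0,1,2,3}, and 4 = 0).\<close>
definition e1 :: "real^4" where "e1 = axis 1 1"
definition e2 :: "real^4" where "e2 = axis 2 1"
definition e3 :: "real^4" where "e3 = axis 3 1"
definition e4 :: "real^4" where "e4 = axis 4 1"

definition pu :: "(real \<Rightarrow> real \<Rightarrow> 'a::real_normed_vector) \<Rightarrow> real \<Rightarrow> real \<Rightarrow> 'a" where
  "pu f u v = vector_derivative (\<lambda>x. f x v) (at u)"
definition pv :: "(real \<Rightarrow> real \<Rightarrow> 'a::real_normed_vector) \<Rightarrow> real \<Rightarrow> real \<Rightarrow> 'a" where
  "pv f u v = vector_derivative (\<lambda>y. f u y) (at v)"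

text \<open>C-infinity on an open set U: f lies in a family of continuous maps that is closed
  under taking both partial derivatives (so all iterated partials exist and are continuous).\<close>
definition smooth2 :: "(real \<times> real) set \<Rightarrow> (real \<Rightarrow> real \<Rightarrow> 'a::real_normed_vector) \<Rightarrow> bool" where
  "smooth2 U f \<longleftrightarrow> (\<exists>S. f \<in> S \<and> (\<forall>g\<in>S. continuous_on U (case_prod g) \<and>
      (\<exists>gu\<in>S. \<forall>(u,v)\<in>U. ((\<lambda>x. g x v) has_vector_derivative gu u v) (at u)) \<and>
      (\<exists>gv\<in>S. \<forall>(u,v)\<in>U. ((\<lambda>y. g u y) has_vector_derivative gv u v) (at v))))"

text \<open>Mean curvature in S^3 (w.r.t. unit normal n) and Gauss curvature (via the Gauss equation
  for a surface in the unit sphere: K = 1 + det II / det I).\<close>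
definition mean_curvature :: "(real \<Rightarrow> real \<Rightarrow> real^4) \<Rightarrow> (real \<Rightarrow> real \<Rightarrow> real^4) \<Rightarrow> real \<Rightarrow> real \<Rightarrow> real" where
  "mean_curvature l n u v =
    (let EE = pu l u v \<bullet> pu l u v; FF = pu l u v \<bullet> pv l u v; GG = pv l u v \<bullet> pv l u v;
         LL = pu (pu l) u v \<bullet> n u v; MM = pv (pu l) u v \<bullet> n u v; NN = pv (pv l) u v \<bullet> n u v
     in (EE * NN + GG * LL - 2 * FF * MM) / (2 * (EE * GG - FF\<^sup>2)))"

definition gauss_curvature :: "(real \<Rightarrow> real \<Rightarrow> real^4) \<Rightarrow> (real \<Rightarrow> real \<Rightarrow> real^4) \<Rightarrow> real \<Rightarrow> real \<Rightarrow> real" where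
  "gauss_curvature l n u v =
    (let EE = pu l u v \<bullet> pu l u v; FF = pu l u v \<bullet> pv l u v; GG = pv l u v \<bullet> pv l u v;
         LL = pu (pu l) u v \<bullet> n u v; MM = pv (pu l) u v \<bullet> n u v; NN = pv (pv l) u v \<bullet> n u v
     in 1 + (LL * NN - MM\<^sup>2) / (EE * GG - FF\<^sup>2))"

definition frenet_k1 :: "real^4 \<Rightarrow> real^4 \<Rightarrow> real" where
  "frenet_k1 c1 c2 = sqrt ((norm c1)\<^sup>2 * (norm c2)\<^sup>2 - (c1 \<bullet> c2)\<^sup>2) / (norm c1) ^ 3"

text \<open>A circle: regular curve with constant first Frenet curvature and vanishing higher
  Frenet curvatures (the Frenet frame stops after the normal: c''' lies in span{c',c''}).\<close>
definition is_circle :: "(real \<Rightarrow> real^4) \<Rightarrow> real set \<Rightarrow> bool" where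
  "is_circle c I \<longleftrightarrow> (\<exists>c1 c2 c3 k. \<forall>v\<in>I.
      (c has_vector_derivative c1 v) (at v) \<and> (c1 has_vector_derivative c2 v) (at v) \<and>
      (c2 has_vector_derivative c3 v) (at v) \<and> c1 v \<noteq> 0 \<and>
      frenet_k1 (c1 v) (c2 v) = k \<and> c3 v \<in> span {c1 v, c2 v})"

definition hfun :: "real \<Rightarrow> real \<Rightarrow> real" where
  "hfun \<alpha> x = sqrt \<alpha> *
     (let g = (\<lambda>\<tau>. 1 / sqrt (\<alpha>\<^sup>2 * (cos \<tau>)\<^sup>2 + (sin \<tau>)\<^sup>2))
      in if 0 \<le> x then integral {0..x} g else - integral {x..0} g)"

end

theory Submission
  imports Defs
begin

lemma vd_inner:
  fixes f g :: "real \<Rightarrow> 'a::real_inner"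
  assumes "(f has_vector_derivative f') (at x)" "(g has_vector_derivative g') (at x)"
  shows "((\<lambda>x. f x \<bullet> g x) has_real_derivative (f' \<bullet> g x + f x \<bullet> g')) (at x)"
proof -
  have "((\<lambda>x. f x \<bullet> g x) has_derivative (\<lambda>h. f x \<bullet> (h *\<^sub>R g') + (h *\<^sub>R f') \<bullet> g x)) (at x)"
    using assms by (intro has_derivative_inner) (auto simp: has_vector_derivative_def)
  then show ?thesis unfolding has_field_derivative_def
    by (rule has_derivative_eq_rhs) (auto simp: algebra_simps)
qed

lemma deriv_const_zero:
  fixes \<phi> :: "real \<Rightarrow> real"
  assumes "(\<phi> has_real_derivative D) (at x)" "x \<in> {c<..<d}" "\<forall>y\<in>{c<..<d}. \<phi> y = k"
  shows "D = 0"
proof -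
  have "((\<lambda>_. k) has_real_derivative 0) (at x)" by simp
  then have "(\<phi> has_real_derivative 0) (at x)"
    by (rule has_field_derivative_transform_within_open[where S="{c<..<d}"]) (use assms in auto)
  then show ?thesis using assms(1) DERIV_unique by blast
qed

lemma deriv_agree:
  fixes \<phi> \<psi> :: "real \<Rightarrow> real"
  assumes "(\<phi> has_real_derivative D) (at x)" "(\<psi> has_real_derivative D') (at x)"
    "x \<in> {c<..<d}" "\<forall>y\<in>{c<..<d}. \<phi> y = \<psi> y"
  shows "D = D'"
proof -
  have "(\<psi> has_real_derivative D) (at x)"
    by (rule has_field_derivative_transform_within_open[OF assms(1), where S="{c<..<d}"]) (use assms in auto)
  then show ?thesis using assms(2) DERIV_unique by blast
qed

lemma vderiv_agree:
  fixes \<phi> \<psi> :: "real \<Rightarrow> 'a::real_normed_vector"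
  assumes "(\<phi> has_vector_derivative D) (at x)" "(\<psi> has_vector_derivative D') (at x)"
    "x \<in> {c<..<d}" "\<forall>y\<in>{c<..<d}. \<phi> y = \<psi> y"
  shows "D = D'"
proof -
  have "(\<psi> has_vector_derivative D) (at x)"
    by (rule has_vector_derivative_transform_within_open[OF assms(1), where S="{c<..<d}"]) (use assms in auto)
  then show ?thesis using assms(2) vector_derivative_unique_at by blast
qed

lemma vec_eq_by_inner:
  fixes x y :: "'a::real_inner"
  assumes "\<And>w. x \<bullet> w = y \<bullet> w" shows "x = y"
proof -
  have "(x - y) \<bullet> (x - y) = 0" using assms[of "x-y"] by (simp add: inner_diff_left)
  then show ?thesis by simp
qed

locale fam =
  fixes a b :: real and S :: "(real \<Rightarrow> real \<Rightarrow> real^4) set"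
  assumes a: "a > 0" and b: "b > 0"
  and S: "\<forall>g\<in>S. continuous_on ({-a<..<a} \<times> {-b<..<b}) (case_prod g) \<and>
      (\<exists>gu\<in>S. \<forall>(u,v)\<in>{-a<..<a} \<times> {-b<..<b}. ((\<lambda>x. g x v) has_vector_derivative gu u v) (at u)) \<and>
      (\<exists>gv\<in>S. \<forall>(u,v)\<in>{-a<..<a} \<times> {-b<..<b}. ((\<lambda>y. g u y) has_vector_derivative gv u v) (at v))"
begin

abbreviation "UU \<equiv> {-a<..<a} \<times> {-b<..<b}"

definition C :: "(real \<Rightarrow> real \<Rightarrow> real^4) \<Rightarrow> bool" where
  "C f \<longleftrightarrow> (\<exists>g\<in>S. \<forall>u v. (u,v) \<in> UU \<longrightarrow> f u v = g u v)"

lemma C_du':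
  assumes "C f"
  shows "\<exists>gu\<in>S. \<forall>u v. (u,v)\<in>UU \<longrightarrow> pu f u v = gu u v \<and> ((\<lambda>x. f x v) has_vector_derivative gu u v) (at u)"
proof -
  obtain g where g: "g \<in> S" "\<And>u v. (u,v) \<in> UU \<Longrightarrow> f u v = g u v" using assms unfolding C_def by blast
  obtain gu where gu: "gu \<in> S" "\<forall>(u,v)\<in>UU. ((\<lambda>x. g x v) has_vector_derivative gu u v) (at u)"
    using S g(1) by blast
  have *: "((\<lambda>x. f x v) has_vector_derivative gu u v) (at u)" if "(u,v)\<in>UU" for u v
  proof (rule has_vector_derivative_transform_within_open[where S="{-a<..<a}"])
    show "((\<lambda>x. g x v) has_vector_derivative gu u v) (at u)" using gu(2) that by blast
  qed (use that g(2) in auto)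
  show ?thesis
    by (rule bexI[OF _ gu(1)]) (auto simp: pu_def * vector_derivative_at)
qed

lemma C_dv':
  assumes "C f"
  shows "\<exists>gv\<in>S. \<forall>u v. (u,v)\<in>UU \<longrightarrow> pv f u v = gv u v \<and> ((\<lambda>y. f u y) has_vector_derivative gv u v) (at v)"
proof -
  obtain g where g: "g \<in> S" "\<And>u v. (u,v) \<in> UU \<Longrightarrow> f u v = g u v" using assms unfolding C_def by blast
  obtain gv where gv: "gv \<in> S" "\<forall>(u,v)\<in>UU. ((\<lambda>y. g u y) has_vector_derivative gv u v) (at v)"
    using S g(1) by blast
  have *: "((\<lambda>y. f u y) has_vector_derivative gv u v) (at v)" if "(u,v)\<in>UU" for u v
  proof (rule has_vector_derivative_transform_within_open[where S="{-b<..<b}"])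
    show "((\<lambda>y. g u y) has_vector_derivative gv u v) (at v)" using gv(2) that by blast
  qed (use that g(2) in auto)
  show ?thesis
    by (rule bexI[OF _ gv(1)]) (auto simp: pv_def * vector_derivative_at)
qed

lemma C_du: "C f \<Longrightarrow> (u,v)\<in>UU \<Longrightarrow> ((\<lambda>x. f x v) has_vector_derivative pu f u v) (at u)"
  using C_du' by metis

lemma C_dv: "C f \<Longrightarrow> (u,v)\<in>UU \<Longrightarrow> ((\<lambda>y. f u y) has_vector_derivative pv f u v) (at v)"
  using C_dv' by metis

lemma C_pu: "C f \<Longrightarrow> C (pu f)"
  using C_du' unfolding C_def by metis

lemma C_pv: "C f \<Longrightarrow> C (pv f)"
  using C_dv' unfolding C_def by metis

lemma C_cont: "C f \<Longrightarrow> continuous_on UU (case_prod f)"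
proof -
  assume "C f"
  then obtain g where g: "g \<in> S" "\<And>u v. (u,v) \<in> UU \<Longrightarrow> f u v = g u v" unfolding C_def by blast
  have "continuous_on UU (case_prod g)" using S g(1) by blast
  then show ?thesis by (rule continuous_on_eq) (use g(2) in auto)
qed

end

context fam begin

lemma C_schwarz:
  assumes Cf: "C f" and uv: "(u,v) \<in> UU"
  shows "pv (pu f) u v = pu (pv f) u v"
proof (rule vec_eq_by_inner)
  fix w :: "real^4"
  define A where "A = pv (pu f)"
  define B where "B = pu (pv f)"
  have CA: "C A" unfolding A_def by (intro C_pv C_pu Cf)
  have CB: "C B" unfolding B_def by (intro C_pv C_pu Cf)
  have key: "\<exists>\<xi> \<eta> \<xi>' \<eta>'. u < \<xi> \<and> \<xi> < u + h \<and> v < \<eta> \<and> \<eta> < v + h \<and>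
      u < \<xi>' \<and> \<xi>' < u + h \<and> v < \<eta>' \<and> \<eta>' < v + h \<and> A \<xi> \<eta> \<bullet> w = B \<xi>' \<eta>' \<bullet> w"
    if h: "0 < h" "u + h < a" "v + h < b" for h
  proof -
    define F where "F x y = f x y \<bullet> w" for x y
    define \<Delta> where "\<Delta> = F (u+h) (v+h) - F (u+h) v - F u (v+h) + F u v"
    have inU: "(x,y) \<in> UU" if "u \<le> x" "x \<le> u+h" "v \<le> y" "y \<le> v+h" for x y
      using that uv h by auto
    have "\<exists>\<xi>. u < \<xi> \<and> \<xi> < u+h \<and> (\<lambda>x. F x (v+h) - F x v) (u+h) - (\<lambda>x. F x (v+h) - F x v) u
            = (u + h - u) * ((pu f \<xi> (v+h) - pu f \<xi> v) \<bullet> w)"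
    proof (rule MVT2)
      fix x assume "u \<le> x" "x \<le> u+h"
      then have "(x, v+h) \<in> UU" "(x,v) \<in> UU" using inU[of x v] inU[of x "v+h"] h by auto
      then show "DERIV (\<lambda>x. F x (v+h) - F x v) x :> (pu f x (v+h) - pu f x v) \<bullet> w"
        unfolding F_def using vd_inner[OF C_du[OF Cf] has_vector_derivative_const[of w]]
        by (auto intro!: derivative_eq_intros simp: inner_diff_left)
    qed (use h in auto)
    then obtain \<xi> where xi: "u < \<xi>" "\<xi> < u+h"
      "\<Delta> = h * ((pu f \<xi> (v+h) - pu f \<xi> v) \<bullet> w)" unfolding \<Delta>_def by (auto simp: algebra_simps)
    have "\<exists>\<eta>. v < \<eta> \<and> \<eta> < v+h \<and> (\<lambda>y. pu f \<xi> y \<bullet> w) (v+h) - (\<lambda>y. pu f \<xi> y \<bullet> w) v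
            = (v + h - v) * (A \<xi> \<eta> \<bullet> w)"
    proof (rule MVT2)
      fix y assume "v \<le> y" "y \<le> v+h"
      then have "(\<xi>, y) \<in> UU" using inU[of \<xi> y] xi by auto
      then show "DERIV (\<lambda>y. pu f \<xi> y \<bullet> w) y :> A \<xi> y \<bullet> w"
        unfolding A_def using vd_inner[OF C_dv[OF C_pu[OF Cf]] has_vector_derivative_const[of w]]
        by auto
    qed (use h in auto)
    then obtain \<eta> where eta: "v < \<eta>" "\<eta> < v+h" "\<Delta> = h * h * (A \<xi> \<eta> \<bullet> w)"
      using xi(3) by (auto simp: inner_diff_left algebra_simps)
    have "\<exists>\<eta>'. v < \<eta>' \<and> \<eta>' < v+h \<and> (\<lambda>y. F (u+h) y - F u y) (v+h) - (\<lambda>y. F (u+h) y - F u y) v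
            = (v + h - v) * ((pv f (u+h) \<eta>' - pv f u \<eta>') \<bullet> w)"
    proof (rule MVT2)
      fix y assume "v \<le> y" "y \<le> v+h"
      then have "(u+h, y) \<in> UU" "(u,y) \<in> UU" using inU[of "u+h" y] inU[of u y] h by auto
      then show "DERIV (\<lambda>y. F (u+h) y - F u y) y :> (pv f (u+h) y - pv f u y) \<bullet> w"
        unfolding F_def using vd_inner[OF C_dv[OF Cf] has_vector_derivative_const[of w]]
        by (auto intro!: derivative_eq_intros simp: inner_diff_left)
    qed (use h in auto)
    then obtain \<eta>' where eta': "v < \<eta>'" "\<eta>' < v+h"
      "\<Delta> = h * ((pv f (u+h) \<eta>' - pv f u \<eta>') \<bullet> w)" unfolding \<Delta>_def by (auto simp: algebra_simps)
    have "\<exists>\<xi>'. u < \<xi>' \<and> \<xi>' < u+h \<and> (\<lambda>x. pv f x \<eta>' \<bullet> w) (u+h) - (\<lambda>x. pv f x \<eta>' \<bullet> w) u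
            = (u + h - u) * (B \<xi>' \<eta>' \<bullet> w)"
    proof (rule MVT2)
      fix x assume "u \<le> x" "x \<le> u+h"
      then have "(x, \<eta>') \<in> UU" using inU[of x \<eta>'] eta' by auto
      then show "DERIV (\<lambda>x. pv f x \<eta>' \<bullet> w) x :> B x \<eta>' \<bullet> w"
        unfolding B_def using vd_inner[OF C_du[OF C_pv[OF Cf]] has_vector_derivative_const[of w]]
        by auto
    qed (use h in auto)
    then obtain \<xi>' where xi': "u < \<xi>'" "\<xi>' < u+h" "\<Delta> = h * h * (B \<xi>' \<eta>' \<bullet> w)"
      using eta'(3) by (auto simp: inner_diff_left algebra_simps)
    have "A \<xi> \<eta> \<bullet> w = B \<xi>' \<eta>' \<bullet> w" using eta(3) xi'(3) h(1) by simp
    then show ?thesis using xi eta xi' eta' by blast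
  qed
  show "A u v \<bullet> w = B u v \<bullet> w"
  proof (rule ccontr)
    assume ne: "A u v \<bullet> w \<noteq> B u v \<bullet> w"
    define e where "e = \<bar>A u v \<bullet> w - B u v \<bullet> w\<bar> / (2 * (norm w + 1))"
    have e: "e > 0" using ne norm_ge_zero[of w] unfolding e_def by (auto intro!: divide_pos_pos simp del: norm_ge_zero)
    obtain d1 where d1: "d1 > 0" "\<forall>p\<in>UU. dist p (u,v) < d1 \<longrightarrow> dist (case_prod A p) (A u v) < e"
      using C_cont[OF CA] uv e unfolding continuous_on_iff by fastforce
    obtain d2 where d2: "d2 > 0" "\<forall>p\<in>UU. dist p (u,v) < d2 \<longrightarrow> dist (case_prod B p) (B u v) < e"
      using C_cont[OF CB] uv e unfolding continuous_on_iff by fastforce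
    define h where "h = min (min (d1/2) (d2/2)) (min ((a-u)/2) ((b-v)/2))"
    have hle: "h \<le> (a-u)/2" "h \<le> (b-v)/2" "h \<le> d1/2" "h \<le> d2/2" unfolding h_def min_def by auto
    have h: "0 < h" "u + h < a" "v + h < b" "2*h \<le> d1" "2*h \<le> d2" using uv d1 d2 hle unfolding h_def by auto
    obtain \<xi> \<eta> \<xi>' \<eta>' where P: "u < \<xi>" "\<xi> < u + h" "v < \<eta>" "\<eta> < v + h"
      "u < \<xi>'" "\<xi>' < u + h" "v < \<eta>'" "\<eta>' < v + h" "A \<xi> \<eta> \<bullet> w = B \<xi>' \<eta>' \<bullet> w"
      using key[OF h(1-3)] by blast
    have dd: "dist (x,y) (u,v) < 2*h" if "u < x" "x < u + h" "v < y" "y < v+h" for x y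
    proof -
      have "dist (x,y) (u,v) = sqrt ((dist x u)\<^sup>2 + (dist y v)\<^sup>2)" by (rule dist_Pair_Pair)
      also have "\<dots> \<le> \<bar>dist x u\<bar> + \<bar>dist y v\<bar>" by (rule sqrt_sum_squares_le_sum_abs)
      also have "\<dots> < 2*h" using that by (auto simp: dist_real_def)
      finally show ?thesis .
    qed
    have "(\<xi>,\<eta>) \<in> UU" "(\<xi>',\<eta>') \<in> UU" using P uv h by auto
    then have n1: "norm (A \<xi> \<eta> - A u v) < e" and n2: "norm (B \<xi>' \<eta>' - B u v) < e"
      using d1(2) d2(2) dd[OF P(1-4)] dd[OF P(5-8)] h by (auto simp: dist_norm)
    have c1: "\<bar>(A \<xi> \<eta> - A u v) \<bullet> w\<bar> \<le> e * norm w"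
      using n1 Cauchy_Schwarz_ineq2[of "A \<xi> \<eta> - A u v" w]
      by (meson less_imp_le mult_right_mono norm_ge_zero order_trans)
    have c2: "\<bar>(B \<xi>' \<eta>' - B u v) \<bullet> w\<bar> \<le> e * norm w"
      using n2 Cauchy_Schwarz_ineq2[of "B \<xi>' \<eta>' - B u v" w]
      by (meson less_imp_le mult_right_mono norm_ge_zero order_trans)
    have "\<bar>A u v \<bullet> w - B u v \<bullet> w\<bar> \<le> 2 * e * norm w"
      using c1 c2 P(9) by (auto simp: inner_diff_left)
    also have "\<dots> < 2 * e * (norm w + 1)" using e by simp
    also have "\<dots> = \<bar>A u v \<bullet> w - B u v \<bullet> w\<bar>" unfolding e_def
      using norm_ge_zero[of w] by (simp add: field_simps del: norm_ge_zero)
    finally show False by simp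
  qed
qed

end

lemma frame_decomp:
  fixes X P Q R N :: "real^4"
  assumes n: "P\<bullet>P = 1" "Q\<bullet>Q = e" "R\<bullet>R = e" "N\<bullet>N = 1" "e > 0"
    and o: "P\<bullet>Q = 0" "P\<bullet>R = 0" "P\<bullet>N = 0" "Q\<bullet>R = 0" "Q\<bullet>N = 0" "R\<bullet>N = 0"
  shows "X = (X\<bullet>P) *\<^sub>R P + ((X\<bullet>Q)/e) *\<^sub>R Q + ((X\<bullet>R)/e) *\<^sub>R R + (X\<bullet>N) *\<^sub>R N"
proof -
  define B where "B = {P,Q,R,N}"
  have ne: "P \<noteq> 0" "Q \<noteq> 0" "R \<noteq> 0" "N \<noteq> 0" using n by auto
  have d: "P \<noteq> Q" "P \<noteq> R" "P \<noteq> N" "Q \<noteq> R" "Q \<noteq> N" "R \<noteq> N"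
    using n o by (metis inner_commute zero_neq_one less_irrefl)+
  have o': "Q\<bullet>P = 0" "R\<bullet>P = 0" "N\<bullet>P = 0" "R\<bullet>Q = 0" "N\<bullet>Q = 0" "N\<bullet>R = 0"
    using o by (simp_all add: inner_commute)
  have po: "pairwise orthogonal B" unfolding B_def pairwise_def orthogonal_def
    using o o' by auto
  have ind: "independent B" using pairwise_orthogonal_independent[OF po] ne unfolding B_def by auto
  have cB: "card B = 4" unfolding B_def using d by auto
  have "UNIV \<subseteq> span B" by (rule card_ge_dim_independent[OF _ ind]) (use cB in auto)
  define Y where "Y = X - ((X\<bullet>P) *\<^sub>R P + ((X\<bullet>Q)/e) *\<^sub>R Q + ((X\<bullet>R)/e) *\<^sub>R R + (X\<bullet>N) *\<^sub>R N)"
  have e0: "e \<noteq> 0" using n by auto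
  have "Y \<bullet> P = 0" "Y \<bullet> Q = 0" "Y \<bullet> R = 0" "Y \<bullet> N = 0"
    unfolding Y_def using n o o' e0 by (simp_all add: inner_diff_left inner_add_left)
  then have "orthogonal Y y" if "y \<in> B" for y
    using that unfolding B_def orthogonal_def by auto
  then have "orthogonal Y Y" using \<open>UNIV \<subseteq> span B\<close> orthogonal_to_span by blast
  then have "Y = 0" unfolding orthogonal_def by simp
  then show ?thesis unfolding Y_def by simp
qed

lemma const_inner:
  fixes f g :: "real \<Rightarrow> real^4"
  assumes "(f has_vector_derivative F) (at x)" "(g has_vector_derivative G) (at x)"
    "x \<in> {c<..<d}" "\<forall>y\<in>{c<..<d}. f y \<bullet> g y = k"
  shows "F \<bullet> g x + f x \<bullet> G = 0"
  using deriv_const_zero[OF vd_inner[OF assms(1,2)] assms(3,4)] .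

locale geo = fam +
  fixes l n :: "real \<Rightarrow> real \<Rightarrow> real^4" and E :: "real \<Rightarrow> real"
  assumes Cl: "C l"
   and Epos: "\<forall>u\<in>{-a<..<a}. E u > 0"
   and ff: "\<forall>(u,v)\<in>UU. pu l u v \<bullet> pu l u v = E u \<and> pv l u v \<bullet> pv l u v = E u \<and>
          pu l u v \<bullet> pv l u v = 0 \<and> l u v \<bullet> l u v = 1"
   and nor: "\<forall>(u,v)\<in>UU. n u v \<bullet> n u v = 1 \<and> n u v \<bullet> l u v = 0 \<and> n u v \<bullet> pu l u v = 0 \<and> n u v \<bullet> pv l u v = 0"
   and sff: "\<forall>(u,v)\<in>UU. pu (pu l) u v \<bullet> n u v = 1 \<and> pv (pu l) u v \<bullet> n u v = 0 \<and> pv (pv l) u v \<bullet> n u v = -1"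
begin

abbreviation "Lu \<equiv> pu l"
abbreviation "Lv \<equiv> pv l"
abbreviation "Luu \<equiv> pu (pu l)"
abbreviation "Luv \<equiv> pv (pu l)"
abbreviation "Lvv \<equiv> pv (pv l)"

lemma CLu: "C Lu" and CLv: "C Lv" and CLuu: "C Luu" and CLuv: "C Luv" and CLvv: "C Lvv"
  by (simp_all add: C_pu C_pv Cl)

lemma UU_u: "(u,v) \<in> UU \<Longrightarrow> x \<in> {-a<..<a} \<Longrightarrow> (x,v) \<in> UU" by auto
lemma UU_v: "(u,v) \<in> UU \<Longrightarrow> y \<in> {-b<..<b} \<Longrightarrow> (u,y) \<in> UU" by auto
lemma UU_iu: "(u,v) \<in> UU \<Longrightarrow> u \<in> {-a<..<a}" by auto
lemma UU_iv: "(u,v) \<in> UU \<Longrightarrow> v \<in> {-b<..<b}" by auto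

lemma ff': assumes "(u,v) \<in> UU"
  shows "Lu u v \<bullet> Lu u v = E u" "Lv u v \<bullet> Lv u v = E u" "Lu u v \<bullet> Lv u v = 0" "l u v \<bullet> l u v = 1"
    "Lv u v \<bullet> Lu u v = 0"
  using ff assms by (auto simp: inner_commute)

lemma nor': assumes "(u,v) \<in> UU"
  shows "n u v \<bullet> n u v = 1" "n u v \<bullet> l u v = 0" "n u v \<bullet> Lu u v = 0" "n u v \<bullet> Lv u v = 0"
    "l u v \<bullet> n u v = 0" "Lu u v \<bullet> n u v = 0" "Lv u v \<bullet> n u v = 0"
  using nor assms by (auto simp: inner_commute)

lemma sff': assumes "(u,v) \<in> UU"
  shows "Luu u v \<bullet> n u v = 1" "Luv u v \<bullet> n u v = 0" "Lvv u v \<bullet> n u v = -1"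
  using sff assms by auto

lemma Epos': "(u,v) \<in> UU \<Longrightarrow> E u > 0" using Epos by auto

lemma cu:
  assumes "C f" "C g" "(u,v) \<in> UU" "\<And>x. x \<in> {-a<..<a} \<Longrightarrow> f x v \<bullet> g x v = k"
  shows "pu f u v \<bullet> g u v + f u v \<bullet> pu g u v = 0"
  by (rule const_inner[OF C_du[OF assms(1,3)] C_du[OF assms(2,3)], of "-a" a k]) (use assms in auto)

lemma cv:
  assumes "C f" "C g" "(u,v) \<in> UU" "\<And>y. y \<in> {-b<..<b} \<Longrightarrow> f u y \<bullet> g u y = k"
  shows "pv f u v \<bullet> g u v + f u v \<bullet> pv g u v = 0"
  by (rule const_inner[OF C_dv[OF assms(1,3)] C_dv[OF assms(2,3)], of "-b" b k]) (use assms in auto)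

definition Ed :: "real \<Rightarrow> real" where "Ed u = 2 * (Luu u 0 \<bullet> Lu u 0)"
definition c :: "real \<Rightarrow> real" where "c u = Ed u / (2 * E u)"

lemma E_deriv: assumes "u \<in> {-a<..<a}" shows "(E has_real_derivative Ed u) (at u)"
proof -
  have uv: "(u,0) \<in> UU" using assms b by auto
  have "((\<lambda>x. Lu x 0 \<bullet> Lu x 0) has_real_derivative (Luu u 0 \<bullet> Lu u 0 + Lu u 0 \<bullet> Luu u 0)) (at u)"
    by (rule vd_inner[OF C_du[OF CLu uv] C_du[OF CLu uv]])
  then have "((\<lambda>x. Lu x 0 \<bullet> Lu x 0) has_real_derivative Ed u) (at u)"
    unfolding Ed_def by (simp add: inner_commute)
  then show ?thesis
    by (rule has_field_derivative_transform_within_open[where S="{-a<..<a}"])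
       (use assms ff' b in auto)
qed

lemma Ed_v: assumes "(u,v) \<in> UU" shows "2 * (Luu u v \<bullet> Lu u v) = Ed u"
proof -
  have "((\<lambda>x. Lu x v \<bullet> Lu x v) has_real_derivative (Luu u v \<bullet> Lu u v + Lu u v \<bullet> Luu u v)) (at u)"
    by (rule vd_inner[OF C_du[OF CLu assms] C_du[OF CLu assms]])
  from deriv_agree[OF this E_deriv, of "-a" a] assms ff'
  show ?thesis by (auto simp: inner_commute)
qed

lemma Lvu_v: assumes "(u,v) \<in> UU" shows "2 * (pu Lv u v \<bullet> Lv u v) = Ed u"
proof -
  have "((\<lambda>x. Lv x v \<bullet> Lv x v) has_real_derivative (pu Lv u v \<bullet> Lv u v + Lv u v \<bullet> pu Lv u v)) (at u)"
    by (rule vd_inner[OF C_du[OF CLv assms] C_du[OF CLv assms]])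
  from deriv_agree[OF this E_deriv, of "-a" a] assms ff'
  show ?thesis by (auto simp: inner_commute)
qed

lemma schw: "(u,v) \<in> UU \<Longrightarrow> pu Lv u v = Luv u v"
  using C_schwarz[OF Cl] by simp

lemma Lu_l: assumes uv: "(u,v) \<in> UU" shows "Lu u v \<bullet> l u v = 0"
proof -
  have "Lu u v \<bullet> l u v + l u v \<bullet> Lu u v = 0" by (rule cu[OF Cl Cl uv, of 1]) (use uv ff' in auto)
  then show ?thesis by (simp add: inner_commute)
qed

lemma Lv_l: assumes uv: "(u,v) \<in> UU" shows "Lv u v \<bullet> l u v = 0"
proof -
  have "Lv u v \<bullet> l u v + l u v \<bullet> Lv u v = 0" by (rule cv[OF Cl Cl uv, of 1]) (use uv ff' in auto)
  then show ?thesis by (simp add: inner_commute)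
qed

lemma I: assumes uv: "(u,v) \<in> UU"
  shows "Luu u v \<bullet> l u v = - E u" "Luv u v \<bullet> l u v = 0" "Lvv u v \<bullet> l u v = - E u"
   "Luu u v \<bullet> Lu u v = Ed u / 2" "Luv u v \<bullet> Lu u v = 0" "Luv u v \<bullet> Lv u v = Ed u / 2"
   "Lvv u v \<bullet> Lv u v = 0" "Luu u v \<bullet> Lv u v = 0" "Lvv u v \<bullet> Lu u v = - Ed u / 2"
   "Lu u v \<bullet> l u v = 0" "Lv u v \<bullet> l u v = 0"
proof -
  have ul: "\<And>x. x \<in> {-a<..<a} \<Longrightarrow> Lu x v \<bullet> l x v = 0" using Lu_l UU_u[OF uv] by blast
  have ul': "\<And>y. y \<in> {-b<..<b} \<Longrightarrow> Lu u y \<bullet> l u y = 0" using Lu_l UU_v[OF uv] by blast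
  have vl: "\<And>y. y \<in> {-b<..<b} \<Longrightarrow> Lv u y \<bullet> l u y = 0" using Lv_l UU_v[OF uv] by blast
  show "Lu u v \<bullet> l u v = 0" "Lv u v \<bullet> l u v = 0" using Lu_l Lv_l uv by auto
  have "Luu u v \<bullet> l u v + Lu u v \<bullet> Lu u v = 0" by (rule cu[OF CLu Cl uv ul])
  then show "Luu u v \<bullet> l u v = - E u" using ff'[OF uv] by simp
  have "Luv u v \<bullet> l u v + Lu u v \<bullet> Lv u v = 0"
    by (rule cv[OF CLu Cl uv ul'])
  then show "Luv u v \<bullet> l u v = 0" using ff'[OF uv] by simp
  have "Lvv u v \<bullet> l u v + Lv u v \<bullet> Lv u v = 0" by (rule cv[OF CLv Cl uv vl])
  then show "Lvv u v \<bullet> l u v = - E u" using ff'[OF uv] by simp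
  show "Luu u v \<bullet> Lu u v = Ed u / 2" using Ed_v[OF uv] by simp
  have "Luv u v \<bullet> Lu u v + Lu u v \<bullet> Luv u v = 0"
    by (rule cv[OF CLu CLu uv, of "E u"]) (use ff' UU_v[OF uv] in auto)
  then show uvu: "Luv u v \<bullet> Lu u v = 0" by (simp add: inner_commute)
  show "Luv u v \<bullet> Lv u v = Ed u / 2" using Lvu_v[OF uv] schw[OF uv] by simp
  have "Lvv u v \<bullet> Lv u v + Lv u v \<bullet> Lvv u v = 0"
    by (rule cv[OF CLv CLv uv, of "E u"]) (use ff' UU_v[OF uv] in auto)
  then show "Lvv u v \<bullet> Lv u v = 0" by (simp add: inner_commute)
  have "Luu u v \<bullet> Lv u v + Lu u v \<bullet> pu Lv u v = 0"
    by (rule cu[OF CLu CLv uv, of 0]) (use ff' UU_u[OF uv] in auto)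
  then show "Luu u v \<bullet> Lv u v = 0" using uvu schw[OF uv] by (simp add: inner_commute)
  have "Luv u v \<bullet> Lv u v + Lu u v \<bullet> Lvv u v = 0"
    by (rule cv[OF CLu CLv uv, of 0]) (use ff' UU_v[OF uv] in auto)
  then show "Lvv u v \<bullet> Lu u v = - Ed u / 2" using Lvu_v[OF uv] schw[OF uv] by (simp add: inner_commute)
qed

lemma decomp: assumes uv: "(u,v) \<in> UU"
  shows "X = (X \<bullet> l u v) *\<^sub>R l u v + ((X \<bullet> Lu u v)/E u) *\<^sub>R Lu u v + ((X \<bullet> Lv u v)/E u) *\<^sub>R Lv u v
     + (X \<bullet> n u v) *\<^sub>R n u v"
  by (rule frame_decomp) (use ff'[OF uv] nor'[OF uv] I[OF uv] Epos'[OF uv] in \<open>simp_all add: inner_commute\<close>)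

lemma D1: assumes uv: "(u,v) \<in> UU" shows "Luv u v = c u *\<^sub>R Lv u v"
  using decomp[OF uv, of "Luv u v"] I[OF uv] sff'[OF uv] by (simp add: c_def)

lemma D2: assumes uv: "(u,v) \<in> UU" shows "Luu u v = (- E u) *\<^sub>R l u v + c u *\<^sub>R Lu u v + n u v"
  using decomp[OF uv, of "Luu u v"] I[OF uv] sff'[OF uv] by (simp add: c_def)

lemma D3: assumes uv: "(u,v) \<in> UU" shows "Lvv u v = (- E u) *\<^sub>R l u v - c u *\<^sub>R Lu u v - n u v"
  using decomp[OF uv, of "Lvv u v"] I[OF uv] sff'[OF uv] by (simp add: c_def)

end

lemma vd_scale:
  "(f has_vector_derivative f') F \<Longrightarrow> ((\<lambda>x. (k::real) *\<^sub>R f x) has_vector_derivative (k *\<^sub>R f')) F"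
  by (rule bounded_linear.has_vector_derivative[OF bounded_linear_scaleR_right])

context geo begin

definition Edd :: "real \<Rightarrow> real" where "Edd u = 2 * (pu Luu u 0 \<bullet> Lu u 0 + Luu u 0 \<bullet> Luu u 0)"
definition cd :: "real \<Rightarrow> real" where
  "cd u = (Edd u * (2 * E u) - Ed u * (2 * Ed u)) / ((2 * E u) * (2 * E u))"

lemma Ed_deriv: assumes "u \<in> {-a<..<a}" shows "(Ed has_real_derivative Edd u) (at u)"
proof -
  have uv: "(u,0) \<in> UU" using assms b by auto
  have "((\<lambda>x. Luu x 0 \<bullet> Lu x 0) has_real_derivative (pu Luu u 0 \<bullet> Lu u 0 + Luu u 0 \<bullet> Luu u 0)) (at u)"
    by (rule vd_inner[OF C_du[OF CLuu uv] C_du[OF CLu uv]])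
  then have "((\<lambda>x. 2 * (Luu x 0 \<bullet> Lu x 0)) has_real_derivative Edd u) (at u)"
    unfolding Edd_def by (rule DERIV_cmult)
  then show ?thesis unfolding Ed_def by simp
qed

lemma c_deriv: assumes "u \<in> {-a<..<a}" shows "(c has_real_derivative cd u) (at u)"
proof -
  have "((\<lambda>x. Ed x / (2 * E x)) has_real_derivative cd u) (at u)"
    unfolding cd_def
    using Epos assms by (intro DERIV_divide[OF Ed_deriv[OF assms] DERIV_cmult[OF E_deriv[OF assms]]]) force
  then show ?thesis unfolding c_def[abs_def] .
qed

definition Nv where "Nv u v = pv Luu u v + E u *\<^sub>R Lv u v - c u *\<^sub>R Luv u v"
definition Nu where "Nu u v = pu Luu u v + Ed u *\<^sub>R l u v + E u *\<^sub>R Lu u v - cd u *\<^sub>R Lu u v - c u *\<^sub>R Luu u v"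

lemma n_eq: "(u,v) \<in> UU \<Longrightarrow> n u v = Luu u v + E u *\<^sub>R l u v - c u *\<^sub>R Lu u v"
  using D2 by (simp add: algebra_simps)

lemma n_dv: assumes uv: "(u,v) \<in> UU" shows "((\<lambda>y. n u y) has_vector_derivative Nv u v) (at v)"
proof -
  have "((\<lambda>y. Luu u y + E u *\<^sub>R l u y - c u *\<^sub>R Lu u y) has_vector_derivative Nv u v) (at v)"
    unfolding Nv_def
    by (intro has_vector_derivative_diff has_vector_derivative_add C_dv[OF CLuu uv]
        vd_scale C_dv[OF Cl uv] C_dv[OF CLu uv])
  then show ?thesis
    by (rule has_vector_derivative_transform_within_open[where S="{-b<..<b}"])
       (use uv n_eq UU_v[OF uv] in auto)
qed

lemma n_du: assumes uv: "(u,v) \<in> UU" shows "((\<lambda>x. n x v) has_vector_derivative Nu u v) (at u)"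
proof -
  have u: "u \<in> {-a<..<a}" using uv by auto
  have "((\<lambda>x. Luu x v + E x *\<^sub>R l x v - c x *\<^sub>R Lu x v) has_vector_derivative
      (pu Luu u v + (E u *\<^sub>R Lu u v + Ed u *\<^sub>R l u v) - (c u *\<^sub>R Luu u v + cd u *\<^sub>R Lu u v))) (at u)"
    by (intro has_vector_derivative_diff has_vector_derivative_add C_du[OF CLuu uv]
        has_vector_derivative_scaleR C_du[OF Cl uv] C_du[OF CLu uv] E_deriv[OF u] c_deriv[OF u])
  then have "((\<lambda>x. Luu x v + E x *\<^sub>R l x v - c x *\<^sub>R Lu x v) has_vector_derivative Nu u v) (at u)"
    unfolding Nu_def by (simp add: algebra_simps)
  then show ?thesis
    by (rule has_vector_derivative_transform_within_open[where S="{-a<..<a}"])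
       (use uv n_eq UU_u[OF uv] in auto)
qed

lemma Nv_eq: assumes uv: "(u,v) \<in> UU" shows "Nv u v = (1 / E u) *\<^sub>R Lv u v"
proof -
  have nv: "\<And>y. y \<in> {-b<..<b} \<Longrightarrow> (u,y) \<in> UU" using UU_v[OF uv] .
  have 1: "Nv u v \<bullet> l u v + n u v \<bullet> Lv u v = 0"
    by (rule const_inner[OF n_dv[OF uv] C_dv[OF Cl uv], of "-b" b 0]) (use uv nv nor' in auto)
  have 2: "Nv u v \<bullet> Lu u v + n u v \<bullet> Luv u v = 0"
    by (rule const_inner[OF n_dv[OF uv] C_dv[OF CLu uv], of "-b" b 0]) (use uv nv nor' in auto)
  have 3: "Nv u v \<bullet> Lv u v + n u v \<bullet> Lvv u v = 0"
    by (rule const_inner[OF n_dv[OF uv] C_dv[OF CLv uv], of "-b" b 0]) (use uv nv nor' in auto)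
  have 4: "Nv u v \<bullet> n u v + n u v \<bullet> Nv u v = 0"
    by (rule const_inner[OF n_dv[OF uv] n_dv[OF uv], of "-b" b 1]) (use uv nv nor' in auto)
  have "n u v \<bullet> Luv u v = 0" "n u v \<bullet> Lvv u v = -1" "n u v \<bullet> Lv u v = 0"
    using sff'[OF uv] nor'[OF uv] by (simp_all add: inner_commute)
  then have "Nv u v \<bullet> l u v = 0" "Nv u v \<bullet> Lu u v = 0" "Nv u v \<bullet> Lv u v = 1" "Nv u v \<bullet> n u v = 0"
    using 1 2 3 4 by (simp_all add: inner_commute)
  then show ?thesis using decomp[OF uv, of "Nv u v"] by simp
qed

lemma Nu_eq: assumes uv: "(u,v) \<in> UU" shows "Nu u v = (- 1 / E u) *\<^sub>R Lu u v"
proof -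
  have nu: "\<And>x. x \<in> {-a<..<a} \<Longrightarrow> (x,v) \<in> UU" using UU_u[OF uv] .
  have 1: "Nu u v \<bullet> l u v + n u v \<bullet> Lu u v = 0"
    by (rule const_inner[OF n_du[OF uv] C_du[OF Cl uv], of "-a" a 0]) (use uv nu nor' in auto)
  have 2: "Nu u v \<bullet> Lu u v + n u v \<bullet> Luu u v = 0"
    by (rule const_inner[OF n_du[OF uv] C_du[OF CLu uv], of "-a" a 0]) (use uv nu nor' in auto)
  have 3: "Nu u v \<bullet> Lv u v + n u v \<bullet> pu Lv u v = 0"
    by (rule const_inner[OF n_du[OF uv] C_du[OF CLv uv], of "-a" a 0]) (use uv nu nor' in auto)
  have 4: "Nu u v \<bullet> n u v + n u v \<bullet> Nu u v = 0"
    by (rule const_inner[OF n_du[OF uv] n_du[OF uv], of "-a" a 1]) (use uv nu nor' in auto)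
  have "n u v \<bullet> Luu u v = 1" "n u v \<bullet> pu Lv u v = 0" "n u v \<bullet> Lu u v = 0"
    using sff'[OF uv] nor'[OF uv] schw[OF uv] by (simp_all add: inner_commute)
  then have "Nu u v \<bullet> l u v = 0" "Nu u v \<bullet> Lu u v = -1" "Nu u v \<bullet> Lv u v = 0" "Nu u v \<bullet> n u v = 0"
    using 1 2 3 4 by (simp_all add: inner_commute)
  then show ?thesis using decomp[OF uv, of "Nu u v"] by simp
qed

lemma gauss: assumes uv: "(u,v) \<in> UU" shows "cd u = 1 / E u - E u"
proof -
  have u: "u \<in> {-a<..<a}" using uv by auto
  have CLuv': "C (pv Lu)" using CLuv .
  have s2: "pv (pu Lu) u v = pu (pv Lu) u v" using C_schwarz[OF CLu uv] .
  have d1: "((\<lambda>x. Luv x v) has_vector_derivative pu (pv Lu) u v) (at u)" by (rule C_du[OF CLuv uv])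
  have d2: "((\<lambda>x. c x *\<^sub>R Lv x v) has_vector_derivative (c u *\<^sub>R pu Lv u v + cd u *\<^sub>R Lv u v)) (at u)"
    by (intro has_vector_derivative_scaleR c_deriv[OF u] C_du[OF CLv uv])
  have e1: "pu (pv Lu) u v = c u *\<^sub>R pu Lv u v + cd u *\<^sub>R Lv u v"
    by (rule vderiv_agree[OF d1 d2 u]) (use D1 UU_u[OF uv] in auto)
  have d3: "((\<lambda>y. Luu u y) has_vector_derivative pv (pu Lu) u v) (at v)" by (rule C_dv[OF CLuu uv])
  have d4: "((\<lambda>y. (- E u) *\<^sub>R l u y + c u *\<^sub>R Lu u y + n u y) has_vector_derivative
       ((- E u) *\<^sub>R Lv u v + c u *\<^sub>R Luv u v + Nv u v)) (at v)"
    by (intro has_vector_derivative_add vd_scale C_dv[OF Cl uv] C_dv[OF CLu uv] n_dv[OF uv])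
  have e2: "pv (pu Lu) u v = (- E u) *\<^sub>R Lv u v + c u *\<^sub>R Luv u v + Nv u v"
    by (rule vderiv_agree[OF d3 d4, of "-b" b]) (use uv D2 UU_v[OF uv] in auto)
  have "(cd u - (1 / E u - E u)) *\<^sub>R Lv u v = 0"
    using e1 e2 s2 schw[OF uv] D1[OF uv] Nv_eq[OF uv] by (simp add: algebra_simps)
  moreover have "Lv u v \<noteq> 0" using ff'[OF uv] Epos'[OF uv] by auto
  ultimately show ?thesis by simp
qed

end

context geo begin

lemma Lvvv: assumes uv: "(u,v) \<in> UU"
  shows "pv Lvv u v = (- (E u + (c u)\<^sup>2 + 1 / E u)) *\<^sub>R Lv u v"
proof -
  have d3: "((\<lambda>y. Lvv u y) has_vector_derivative pv Lvv u v) (at v)" by (rule C_dv[OF CLvv uv])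
  have d4: "((\<lambda>y. (- E u) *\<^sub>R l u y - c u *\<^sub>R Lu u y - n u y) has_vector_derivative
       ((- E u) *\<^sub>R Lv u v - c u *\<^sub>R Luv u v - Nv u v)) (at v)"
    by (intro has_vector_derivative_diff vd_scale C_dv[OF Cl uv] C_dv[OF CLu uv] n_dv[OF uv])
  have "pv Lvv u v = (- E u) *\<^sub>R Lv u v - c u *\<^sub>R Luv u v - Nv u v"
    by (rule vderiv_agree[OF d3 d4, of "-b" b]) (use uv D3 UU_v[OF uv] in auto)
  then show ?thesis using D1[OF uv] Nv_eq[OF uv] by (simp add: algebra_simps power2_eq_square)
qed

definition Bq :: "real \<Rightarrow> real" where "Bq u = (c u)\<^sup>2 + E u + 1 / E u"

lemma Ed_c: "u \<in> {-a<..<a} \<Longrightarrow> Ed u = 2 * c u * E u"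
  using Epos unfolding c_def by force

lemma Bq_const: assumes u: "u \<in> {-a<..<a}" shows "Bq u = Bq 0"
proof -
  have "(Bq has_real_derivative 0) (at x within {-a<..<a})" if x: "x \<in> {-a<..<a}" for x
  proof -
    have Ex: "E x > 0" using Epos x by blast
    have "(Bq has_real_derivative (2 * c x * cd x + Ed x - Ed x / (E x * E x))) (at x)"
      unfolding Bq_def[abs_def]
      using c_deriv[OF x] E_deriv[OF x] Ex
      by (auto intro!: derivative_eq_intros simp: power2_eq_square field_simps)
    moreover have "2 * c x * cd x + Ed x - Ed x / (E x * E x) = 0"
    proof -
      have g: "cd x = 1 / E x - E x" using gauss[of x 0] x b by auto
      have "2 * c x * cd x + Ed x - Ed x / (E x * E x) = 2 * c x * (cd x + E x - 1 / E x)"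
        using Ed_c[OF x] Ex by (simp add: field_simps)
      also have "\<dots> = 0" using g by simp
      finally show ?thesis .
    qed
    ultimately show ?thesis by (simp add: has_field_derivative_at_within)
  qed
  then obtain k where "\<forall>x\<in>{-a<..<a}. Bq x = k"
    using has_field_derivative_zero_constant[of "{-a<..<a}" Bq] by auto
  then show ?thesis using u a by auto
qed

end

lemma vd_sc: "(f has_real_derivative f') (at y) \<Longrightarrow> ((\<lambda>y. f y *\<^sub>R X) has_vector_derivative f' *\<^sub>R X) (at y)"
  using has_vector_derivative_scaleR[OF _ has_vector_derivative_const, of f f' y UNIV X] by simp

lemma ode3_unique:
  fixes D D1 D2 :: "real \<Rightarrow> real^4"
  assumes k: "k > 0" and z: "0 \<in> {c<..<d}"
    and d: "\<forall>y\<in>{c<..<d}. (D has_vector_derivative D1 y) (at y) \<and> (D1 has_vector_derivative D2 y) (at y)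
       \<and> (D2 has_vector_derivative (-k) *\<^sub>R D1 y) (at y)"
    and i: "D 0 = 0" "D1 0 = 0" "D2 0 = 0"
  shows "\<forall>y\<in>{c<..<d}. D y = 0"
proof -
  define \<Phi> where "\<Phi> y = k * (D1 y \<bullet> D1 y) + D2 y \<bullet> D2 y" for y
  have "(\<Phi> has_real_derivative 0) (at y within {c<..<d})" if y: "y \<in> {c<..<d}" for y
  proof -
    have "(\<Phi> has_real_derivative (k * (D2 y \<bullet> D1 y + D1 y \<bullet> D2 y) + (((-k) *\<^sub>R D1 y) \<bullet> D2 y + D2 y \<bullet> ((-k) *\<^sub>R D1 y)))) (at y)"
      unfolding \<Phi>_def[abs_def] using d y
      by (intro DERIV_add DERIV_cmult vd_inner) auto
    then show ?thesis by (simp add: inner_commute has_field_derivative_at_within)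
  qed
  then obtain K where K: "\<forall>y\<in>{c<..<d}. \<Phi> y = K"
    using has_field_derivative_zero_constant[of "{c<..<d}" \<Phi>] by auto
  have "K = 0" using K z i unfolding \<Phi>_def by force
  have D10: "D1 y = 0" if y: "y \<in> {c<..<d}" for y
  proof -
    have "k * (D1 y \<bullet> D1 y) + D2 y \<bullet> D2 y = 0" using K y \<open>K = 0\<close> unfolding \<Phi>_def by auto
    moreover have "D1 y \<bullet> D1 y \<ge> 0" "D2 y \<bullet> D2 y \<ge> 0" by auto
    ultimately have "D1 y \<bullet> D1 y = 0" using k
      by (metis add_nonneg_eq_0_iff mult_eq_0_iff mult_nonneg_nonneg less_imp_le less_irrefl)
    then show ?thesis by simp
  qed
  have "(D has_vector_derivative 0) (at y within {c<..<d})" if y: "y \<in> {c<..<d}" for y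
  proof -
    have "(D has_vector_derivative D1 y) (at y)" using d y by blast
    then show ?thesis using D10[OF y] has_vector_derivative_at_within by metis
  qed
  then obtain K' where "\<And>y. y \<in> {c<..<d} \<Longrightarrow> D y = K'"
    using has_vector_derivative_zero_constant[of "{c<..<d}" D] by auto
  then show ?thesis using z i by metis
qed

lemma exp_ln_half: assumes "x > 0" shows "exp (ln x / 2) = sqrt x"
proof -
  have "exp (ln x / 2) * exp (ln x / 2) = x"
    using assms by (simp add: exp_add[symmetric])
  then show ?thesis by (metis exp_ge_zero power2_eq_square real_sqrt_unique)
qed

locale geo0 = geo +
  assumes init: "l 0 0 = e1" "pu l 0 0 = sqrt (E 0) *\<^sub>R e2" "pv l 0 0 = sqrt (E 0) *\<^sub>R e3" "n 0 0 = e4"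
begin

definition "s0 = ln (E 0)"
definition "t0 = c 0"
definition "q = sqrt (E 0)"
definition "\<beta> = sqrt (Bq 0)"
definition "AA = exp (s0 / 2) *\<^sub>R e1 + t0 *\<^sub>R e2 + exp (- s0 / 2) *\<^sub>R e4"

lemma a0: "0 \<in> {-a<..<a}" and b0: "0 \<in> {-b<..<b}" and uv00: "(0,0) \<in> UU" using a b by auto

lemma E0: "E 0 > 0" using Epos a0 by blast
lemma q: "q > 0" "q * q = E 0" "exp (s0/2) = q" "exp (- s0/2) = 1 / q" "exp s0 = q * q" "exp (- s0) = 1 / (q * q)"
  using E0 unfolding q_def s0_def
  by (auto simp: exp_ln_half exp_minus[symmetric] exp_ln_half[of "E 0"] exp_minus
     inverse_eq_divide simp del: exp_minus_inverse)

lemma Bq0: "Bq 0 = t0\<^sup>2 + q*q + 1/(q*q)" unfolding Bq_def t0_def using q by simp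
lemma Bq_pos: "Bq 0 > 0" using E0 unfolding Bq_def by (simp add: add_pos_pos add_nonneg_pos)
lemma \<beta>: "\<beta> > 0" "\<beta> * \<beta> = Bq 0" "\<beta>\<^sup>2 = Bq 0" using Bq_pos unfolding \<beta>_def by auto

end

context geo0 begin

definition "A' = (q / (\<beta>*\<beta>)) *\<^sub>R AA"
definition "B' = (q / \<beta>) *\<^sub>R e3"
definition "\<Gamma> y = e1 + (cos (\<beta>*y) - 1) *\<^sub>R A' + sin (\<beta>*y) *\<^sub>R B'" for y
definition "\<Gamma>1 y = (- \<beta> * sin (\<beta>*y)) *\<^sub>R A' + (\<beta> * cos (\<beta>*y)) *\<^sub>R B'" for y
definition "\<Gamma>2 y = (- (\<beta>*\<beta>) * cos (\<beta>*y)) *\<^sub>R A' + (- (\<beta>*\<beta>) * sin (\<beta>*y)) *\<^sub>R B'" for y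

lemma d\<Gamma>: "(\<Gamma> has_vector_derivative \<Gamma>1 y) (at y)" "(\<Gamma>1 has_vector_derivative \<Gamma>2 y) (at y)"
  "(\<Gamma>2 has_vector_derivative (- (\<beta>*\<beta>)) *\<^sub>R \<Gamma>1 y) (at y)"
proof -
  have h1: "((\<lambda>y. cos(\<beta>*y) - 1) has_real_derivative (- \<beta> * sin(\<beta>*y))) (at y)"
    by (auto intro!: derivative_eq_intros)
  have h2: "((\<lambda>y. sin(\<beta>*y)) has_real_derivative (\<beta> * cos(\<beta>*y))) (at y)"
    by (auto intro!: derivative_eq_intros)
  show "(\<Gamma> has_vector_derivative \<Gamma>1 y) (at y)"
    using has_vector_derivative_add[OF has_vector_derivative_add[OF has_vector_derivative_const vd_sc[OF h1]] vd_sc[OF h2]]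
    unfolding \<Gamma>_def[abs_def] \<Gamma>1_def by simp
  have h3: "((\<lambda>y. - \<beta> * sin(\<beta>*y)) has_real_derivative (- (\<beta>*\<beta>) * cos(\<beta>*y))) (at y)"
    by (auto intro!: derivative_eq_intros)
  have h4: "((\<lambda>y. \<beta> * cos(\<beta>*y)) has_real_derivative (- (\<beta>*\<beta>) * sin(\<beta>*y))) (at y)"
    by (auto intro!: derivative_eq_intros)
  show "(\<Gamma>1 has_vector_derivative \<Gamma>2 y) (at y)"
    using has_vector_derivative_add[OF vd_sc[OF h3] vd_sc[OF h4]]
    unfolding \<Gamma>1_def[abs_def] \<Gamma>2_def by simp
  have h5: "((\<lambda>y. - (\<beta>*\<beta>) * cos(\<beta>*y)) has_real_derivative ((\<beta>*\<beta>*\<beta>) * sin(\<beta>*y))) (at y)"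
    by (auto intro!: derivative_eq_intros)
  have h6: "((\<lambda>y. - (\<beta>*\<beta>) * sin(\<beta>*y)) has_real_derivative (- (\<beta>*\<beta>*\<beta>) * cos(\<beta>*y))) (at y)"
    by (auto intro!: derivative_eq_intros)
  show "(\<Gamma>2 has_vector_derivative (- (\<beta>*\<beta>)) *\<^sub>R \<Gamma>1 y) (at y)"
    using has_vector_derivative_add[OF vd_sc[OF h5] vd_sc[OF h6]]
    unfolding \<Gamma>2_def[abs_def] \<Gamma>1_def by (simp add: algebra_simps)
qed

lemma Lvv00: "Lvv 0 0 = (- (q*q)) *\<^sub>R e1 - (t0 * q) *\<^sub>R e2 - e4"
  using D3[OF uv00] init E0 unfolding t0_def q_def by simp

lemma circle0: assumes y: "y \<in> {-b<..<b}" shows "l 0 y = \<Gamma> y"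
proof -
  have k: "\<beta>*\<beta> > 0" using \<beta>(1) by simp
  have d: "\<forall>y\<in>{- b<..<b}.
       ((\<lambda>y. l 0 y - \<Gamma> y) has_vector_derivative Lv 0 y - \<Gamma>1 y) (at y) \<and>
       ((\<lambda>y. Lv 0 y - \<Gamma>1 y) has_vector_derivative Lvv 0 y - \<Gamma>2 y) (at y) \<and>
       ((\<lambda>y. Lvv 0 y - \<Gamma>2 y) has_vector_derivative (- (\<beta> * \<beta>)) *\<^sub>R (Lv 0 y - \<Gamma>1 y)) (at y)"
  proof
    fix y assume y: "y \<in> {-b<..<b}"
    then have uv: "(0,y) \<in> UU" using a by auto
    have e: "pv Lvv 0 y = (- (\<beta>*\<beta>)) *\<^sub>R Lv 0 y"
      using Lvvv[OF uv] \<beta> unfolding Bq_def by (simp add: algebra_simps)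
    have 1: "((\<lambda>y. l 0 y - \<Gamma> y) has_vector_derivative Lv 0 y - \<Gamma>1 y) (at y)"
      by (rule has_vector_derivative_diff[OF C_dv[OF Cl uv] d\<Gamma>(1)])
    have 2: "((\<lambda>y. Lv 0 y - \<Gamma>1 y) has_vector_derivative Lvv 0 y - \<Gamma>2 y) (at y)"
      by (rule has_vector_derivative_diff[OF C_dv[OF CLv uv] d\<Gamma>(2)])
    have 3: "((\<lambda>y. Lvv 0 y - \<Gamma>2 y) has_vector_derivative pv Lvv 0 y - (- (\<beta>*\<beta>)) *\<^sub>R \<Gamma>1 y) (at y)"
      by (rule has_vector_derivative_diff[OF C_dv[OF CLvv uv] d\<Gamma>(3)])
    have "pv Lvv 0 y - (- (\<beta>*\<beta>)) *\<^sub>R \<Gamma>1 y = (- (\<beta> * \<beta>)) *\<^sub>R (Lv 0 y - \<Gamma>1 y)"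
      unfolding e by (simp add: scaleR_diff_right)
    then show "((\<lambda>y. l 0 y - \<Gamma> y) has_vector_derivative Lv 0 y - \<Gamma>1 y) (at y) \<and>
       ((\<lambda>y. Lv 0 y - \<Gamma>1 y) has_vector_derivative Lvv 0 y - \<Gamma>2 y) (at y) \<and>
       ((\<lambda>y. Lvv 0 y - \<Gamma>2 y) has_vector_derivative (- (\<beta> * \<beta>)) *\<^sub>R (Lv 0 y - \<Gamma>1 y)) (at y)"
      using 1 2 3 by simp
  qed
  have i1: "l 0 0 - \<Gamma> 0 = 0" using init unfolding \<Gamma>_def by simp
  have i2: "Lv 0 0 - \<Gamma>1 0 = 0" using init \<beta> unfolding \<Gamma>1_def B'_def q_def by simp
  have i3: "Lvv 0 0 - \<Gamma>2 0 = 0"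
  proof -
    have "\<Gamma>2 0 = (- (\<beta>*\<beta>)) *\<^sub>R A'" unfolding \<Gamma>2_def by simp
    also have "\<dots> = (- q) *\<^sub>R AA" unfolding A'_def using \<beta>(1) by simp
    also have "\<dots> = (- (q*q)) *\<^sub>R e1 - (t0 * q) *\<^sub>R e2 - e4"
      unfolding AA_def using q by (simp add: algebra_simps)
    finally show ?thesis unfolding Lvv00 by simp
  qed
  have "\<forall>y\<in>{-b<..<b}. l 0 y - \<Gamma> y = 0"
    using ode3_unique[OF k b0 d i1 i2 i3] by simp
  then show ?thesis using y by auto
qed

end

context geo0 begin

definition "iz x = exp (- ln (E x) / 2)" for x
definition "ez x = exp (ln (E x) / 2)" for x

lemma Ex_pos: "x \<in> {-a<..<a} \<Longrightarrow> E x > 0" using Epos by blast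

lemma iz_deriv: assumes x: "x \<in> {-a<..<a}" shows "(iz has_real_derivative (- c x * iz x)) (at x)"
proof -
  have "(iz has_real_derivative (iz x * (- (Ed x / E x) / 2))) (at x)"
    unfolding iz_def[abs_def] using E_deriv[OF x] Ex_pos[OF x]
    by (auto intro!: derivative_eq_intros simp: field_simps)
  then show ?thesis using Ex_pos[OF x] unfolding c_def by (simp add: field_simps)
qed

lemma ez_iz: "x \<in> {-a<..<a} \<Longrightarrow> ez x * iz x = 1"
  unfolding ez_def iz_def by (simp add: exp_add[symmetric])

lemma iz0: "iz 0 = 1 / q" using q unfolding iz_def s0_def by (simp add: s0_def)

lemma W_const: assumes uv: "(x,v) \<in> UU" shows "Lu x v - c x *\<^sub>R l x v = Lu x 0 - c x *\<^sub>R l x 0"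
proof -
  have "((\<lambda>y. Lu x y - c x *\<^sub>R l x y) has_vector_derivative 0) (at y within {-b<..<b})"
    if y: "y \<in> {-b<..<b}" for y
  proof -
    have uy: "(x,y) \<in> UU" using uv y by auto
    have "((\<lambda>y. Lu x y - c x *\<^sub>R l x y) has_vector_derivative (Luv x y - c x *\<^sub>R Lv x y)) (at y)"
      by (intro has_vector_derivative_diff vd_scale C_dv[OF CLu uy] C_dv[OF Cl uy])
    then show ?thesis using D1[OF uy] by (simp add: has_vector_derivative_at_within)
  qed
  then obtain K where "\<And>y. y \<in> {-b<..<b} \<Longrightarrow> Lu x y - c x *\<^sub>R l x y = K"
    using has_vector_derivative_zero_constant[of "{-b<..<b}" "\<lambda>y. Lu x y - c x *\<^sub>R l x y"] by auto
  then show ?thesis using uv b by fastforce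
qed

lemma sep: assumes uv: "(u,v) \<in> UU" shows "iz u *\<^sub>R (l u v - l u 0) = iz 0 *\<^sub>R (l 0 v - l 0 0)"
proof -
  have "((\<lambda>x. iz x *\<^sub>R (l x v - l x 0)) has_vector_derivative 0) (at x within {-a<..<a})"
    if x: "x \<in> {-a<..<a}" for x
  proof -
    have xv: "(x,v) \<in> UU" "(x,0) \<in> UU" using uv x b by auto
    have "((\<lambda>x. iz x *\<^sub>R (l x v - l x 0)) has_vector_derivative
        (iz x *\<^sub>R (Lu x v - Lu x 0) + (- c x * iz x) *\<^sub>R (l x v - l x 0))) (at x)"
      by (intro has_vector_derivative_scaleR iz_deriv[OF x] has_vector_derivative_diff
            C_du[OF Cl xv(1)] C_du[OF Cl xv(2)])
    moreover have "iz x *\<^sub>R (Lu x v - Lu x 0) + (- c x * iz x) *\<^sub>R (l x v - l x 0) = 0"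
    proof -
      have "iz x *\<^sub>R (Lu x v - Lu x 0) + (- c x * iz x) *\<^sub>R (l x v - l x 0)
         = iz x *\<^sub>R ((Lu x v - c x *\<^sub>R l x v) - (Lu x 0 - c x *\<^sub>R l x 0))"
        by (simp add: algebra_simps)
      then show ?thesis using W_const[OF xv(1)] by simp
    qed
    ultimately show ?thesis by (simp add: has_vector_derivative_at_within)
  qed
  then obtain K where "\<And>x. x \<in> {-a<..<a} \<Longrightarrow> iz x *\<^sub>R (l x v - l x 0) = K"
    using has_vector_derivative_zero_constant[of "{-a<..<a}" "\<lambda>x. iz x *\<^sub>R (l x v - l x 0)"] by auto
  then show ?thesis using uv a by fastforce
qed

end

context geo0 begin

definition "pp x = iz x *\<^sub>R l x 0 - (1/(\<beta>*\<beta>)) *\<^sub>R AA" for x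
definition "pp1 x = iz x *\<^sub>R (Lu x 0 - c x *\<^sub>R l x 0)" for x
definition "pp2 x = iz x *\<^sub>R (Luu x 0 - (2 * c x) *\<^sub>R Lu x 0 + ((c x)\<^sup>2 - cd x) *\<^sub>R l x 0)" for x
definition "FF x = iz x *\<^sub>R (n x 0 + c x *\<^sub>R Lu x 0 + E x *\<^sub>R l x 0) - AA" for x

lemma x0: "x \<in> {-a<..<a} \<Longrightarrow> (x,0) \<in> UU" using b by auto

lemma dpp: assumes x: "x \<in> {-a<..<a}" shows "(pp has_vector_derivative pp1 x) (at x)"
proof -
  have "(pp has_vector_derivative (iz x *\<^sub>R Lu x 0 + (- c x * iz x) *\<^sub>R l x 0 - 0)) (at x)"
    unfolding pp_def[abs_def]
    by (intro has_vector_derivative_diff has_vector_derivative_scaleR iz_deriv[OF x] C_du[OF Cl x0[OF x]]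
        has_vector_derivative_const)
  then show ?thesis unfolding pp1_def by (simp add: algebra_simps)
qed

lemma dpp1: assumes x: "x \<in> {-a<..<a}" shows "(pp1 has_vector_derivative pp2 x) (at x)"
proof -
  have "(pp1 has_vector_derivative (iz x *\<^sub>R (Luu x 0 - (c x *\<^sub>R Lu x 0 + cd x *\<^sub>R l x 0))
         + (- c x * iz x) *\<^sub>R (Lu x 0 - c x *\<^sub>R l x 0))) (at x)"
    unfolding pp1_def[abs_def]
    by (intro has_vector_derivative_diff has_vector_derivative_scaleR iz_deriv[OF x] C_du[OF Cl x0[OF x]]
        C_du[OF CLu x0[OF x]] c_deriv[OF x])
  moreover have "iz x *\<^sub>R (Luu x 0 - (c x *\<^sub>R Lu x 0 + cd x *\<^sub>R l x 0))
         + (- c x * iz x) *\<^sub>R (Lu x 0 - c x *\<^sub>R l x 0) = pp2 x"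
    unfolding pp2_def by (simp add: vec_eq_iff algebra_simps power2_eq_square)
  ultimately show ?thesis by simp
qed

lemma beq: "x \<in> {-a<..<a} \<Longrightarrow> \<beta> * \<beta> = (c x)\<^sup>2 + E x + 1 / E x"
  using Bq_const \<beta>(2) unfolding Bq_def by metis

lemma cdx: "x \<in> {-a<..<a} \<Longrightarrow> cd x = 1 / E x - E x"
  using gauss x0 by blast

lemma ode_FF: assumes x: "x \<in> {-a<..<a}"
  shows "pp2 x + (2 * c x) *\<^sub>R pp1 x + (\<beta>*\<beta>) *\<^sub>R pp x = FF x"
proof -
  have Ex: "E x \<noteq> 0" using Ex_pos[OF x] by simp
  have bb: "\<beta> * \<beta> \<noteq> 0" using \<beta>(1) by simp
  have e1: "(\<beta>*\<beta>) *\<^sub>R pp x = ((c x)\<^sup>2 + E x + 1/E x) *\<^sub>R (iz x *\<^sub>R l x 0) - AA"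
    using bb unfolding pp_def beq[OF x, symmetric] by (simp add: algebra_simps)
  show ?thesis
    unfolding e1 pp1_def pp2_def FF_def D2[OF x0[OF x]] cdx[OF x]
    using Ex by (simp add: vec_eq_iff field_simps power2_eq_square)
qed

lemma FF_zero: assumes u: "u \<in> {-a<..<a}" shows "FF u = 0"
proof -
  have "(FF has_vector_derivative 0) (at x within {-a<..<a})" if x: "x \<in> {-a<..<a}" for x
  proof -
    have x0': "(x,0) \<in> UU" using x0[OF x] .
    have "(FF has_vector_derivative
       (iz x *\<^sub>R (Nu x 0 + (c x *\<^sub>R Luu x 0 + cd x *\<^sub>R Lu x 0) + (E x *\<^sub>R Lu x 0 + Ed x *\<^sub>R l x 0))
        + (- c x * iz x) *\<^sub>R (n x 0 + c x *\<^sub>R Lu x 0 + E x *\<^sub>R l x 0) - 0)) (at x)"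
      unfolding FF_def[abs_def]
      by (intro has_vector_derivative_diff has_vector_derivative_add has_vector_derivative_scaleR
          iz_deriv[OF x] c_deriv[OF x] E_deriv[OF x] n_du[OF x0'] C_du[OF Cl x0'] C_du[OF CLu x0']
          has_vector_derivative_const)
    moreover have "iz x *\<^sub>R (Nu x 0 + (c x *\<^sub>R Luu x 0 + cd x *\<^sub>R Lu x 0) + (E x *\<^sub>R Lu x 0 + Ed x *\<^sub>R l x 0))
        + (- c x * iz x) *\<^sub>R (n x 0 + c x *\<^sub>R Lu x 0 + E x *\<^sub>R l x 0) - 0 = 0"
      unfolding Nu_eq[OF x0'] D2[OF x0'] Ed_c[OF x] cdx[OF x]
      using Ex_pos[OF x] by (simp add: vec_eq_iff field_simps)
    ultimately show ?thesis by (simp add: has_vector_derivative_at_within)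
  qed
  then obtain K where K: "\<And>x. x \<in> {-a<..<a} \<Longrightarrow> FF x = K"
    using has_vector_derivative_zero_constant[of "{-a<..<a}" FF] by auto
  have "FF 0 = 0"
  proof -
    have i2: "Lu 0 0 = q *\<^sub>R e2" using init(2) unfolding q_def .
    have "E 0 = q * q" using q(2) by simp
    then show ?thesis
      unfolding FF_def iz0 AA_def q(3) q(4) init(1) init(4) i2 t0_def
      using q(1) by (simp add: vec_eq_iff field_simps)
  qed
  then show ?thesis using K[OF u] K[OF a0] by simp
qed

lemma ode_pp: "x \<in> {-a<..<a} \<Longrightarrow> pp2 x + (2 * c x) *\<^sub>R pp1 x + (\<beta>*\<beta>) *\<^sub>R pp x = 0"
  using ode_FF FF_zero by simp

lemma lform: assumes uv: "(u,v) \<in> UU"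
  shows "l u v = exp (ln (E u) / 2) *\<^sub>R pp u
     + (exp (ln (E u) / 2) / \<beta>\<^sup>2) *\<^sub>R (cos (\<beta> * v) *\<^sub>R (exp (s0 / 2) *\<^sub>R e1 + t0 *\<^sub>R e2 + exp (- s0 / 2) *\<^sub>R e4)
        + (\<beta> * sin (\<beta> * v)) *\<^sub>R e3)"
proof -
  have u: "u \<in> {-a<..<a}" and v: "v \<in> {-b<..<b}" using uv by auto
  have ezi: "ez u * iz u = 1" using ez_iz[OF u] .
  have "ez u *\<^sub>R (iz u *\<^sub>R (l u v - l u 0)) = ez u *\<^sub>R (iz 0 *\<^sub>R (l 0 v - l 0 0))"
    using sep[OF uv] by simp
  then have h1: "l u v = l u 0 + (ez u / q) *\<^sub>R (\<Gamma> v - e1)"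
    using ezi unfolding iz0 circle0[OF v] init(1) by (simp add: algebra_simps)
  have h2: "l u 0 = ez u *\<^sub>R (pp u + (1/(\<beta>*\<beta>)) *\<^sub>R AA)"
    unfolding pp_def using ezi by (simp add: algebra_simps)
  have bq: "\<beta>\<^sup>2 = \<beta> * \<beta>" by (simp add: power2_eq_square)
  show ?thesis
    unfolding h1 h2 \<Gamma>_def A'_def B'_def bq ez_def[symmetric] AA_def[symmetric]
    using q(1) \<beta>(1) by (simp add: vec_eq_iff field_simps)
qed

lemma pp0: "pp 0 = (1 / \<beta>\<^sup>2) *\<^sub>R ((exp (- s0 / 2) * (t0\<^sup>2 + exp (- s0))) *\<^sub>R e1 - t0 *\<^sub>R e2 - exp (- s0 / 2) *\<^sub>R e4)"
proof -
  define B where "B = \<beta>\<^sup>2"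
  have B0: "B > 0" unfolding B_def using \<beta>(1) by simp
  have bq: "B = t0\<^sup>2 + q*q + 1/(q*q)" unfolding B_def using \<beta>(3) Bq0 by simp
  have k1: "1/q - q/B = (B - q*q)/(q*B)" using q(1) B0 by (simp add: field_simps)
  have k2: "B - q*q = t0\<^sup>2 + 1/(q*q)" using bq by simp
  have key: "1/q - q/B = (1/q)*(t0\<^sup>2 + 1/(q*q))/B" unfolding k1 k2 by simp
  have "pp 0 = (1/q - q/B) *\<^sub>R e1 - (t0/B) *\<^sub>R e2 - (1/(q*B)) *\<^sub>R e4"
    unfolding pp_def iz0 init(1) AA_def q(3) q(4) \<beta>(2)[symmetric] power2_eq_square[of \<beta>, symmetric] B_def[symmetric]
    using q(1) B0 by (simp add: vec_eq_iff field_simps)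
  also have "\<dots> = ((1/q)*(t0\<^sup>2 + 1/(q*q))/B) *\<^sub>R e1 - (t0/B) *\<^sub>R e2 - (1/(q*B)) *\<^sub>R e4"
    unfolding key ..
  also have "\<dots> = (1 / \<beta>\<^sup>2) *\<^sub>R ((exp (- s0 / 2) * (t0\<^sup>2 + exp (- s0))) *\<^sub>R e1 - t0 *\<^sub>R e2 - exp (- s0 / 2) *\<^sub>R e4)"
    unfolding q(4) q(6) B_def[symmetric]
    using q(1) B0 by (simp add: vec_eq_iff field_simps)
  finally show ?thesis .
qed

lemma pp10: "pp1 0 = (- t0 * exp (- s0 / 2)) *\<^sub>R e1 + e2"
proof -
  have i2: "Lu 0 0 = q *\<^sub>R e2" using init(2) unfolding q_def .
  show ?thesis unfolding pp1_def iz0 i2 init(1) q(4) t0_def using q(1)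
    by (simp add: vec_eq_iff field_simps)
qed

end

definition oint :: "(real \<Rightarrow> real) \<Rightarrow> real \<Rightarrow> real" where
  "oint g x = (if 0 \<le> x then integral {0..x} g else - integral {x..0} g)"

lemma oint_deriv:
  assumes g: "continuous_on {c<..<d} g" and z: "0 \<in> {c<..<d}" and x: "x \<in> {c<..<d}"
  shows "(oint g has_real_derivative g x) (at x)"
proof -
  define e where "e = (c + min x 0) / 2"
  define f where "f = (max x 0 + d) / 2"
  have e: "c < e" "e < min x 0" using z x unfolding e_def by auto
  have f: "max x 0 < f" "f < d" using z x unfolding f_def by auto
  have gc: "continuous_on {e..f} g" by (rule continuous_on_subset[OF g]) (use e f in auto)
  have gi: "g integrable_on {e..f}" by (rule integrable_continuous_interval[OF gc])
  have int: "g integrable_on {p..q}" if "e \<le> p" "q \<le> f" for p q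
    using integrable_on_subinterval[OF gi] that by auto
  define G where "G y = integral {e..y} g - integral {e..0} g" for y
  have eq: "G y = oint g y" if y: "y \<in> {e<..<f}" for y
  proof (cases "0 \<le> y")
    case True
    have "integral {e..0} g + integral {0..y} g = integral {e..y} g"
      by (rule Henstock_Kurzweil_Integration.integral_combine) (use True e y in \<open>auto intro!: int\<close>)
    then show ?thesis unfolding G_def oint_def using True by simp
  next
    case False
    have "integral {e..y} g + integral {y..0} g = integral {e..0} g"
      by (rule Henstock_Kurzweil_Integration.integral_combine) (use False e y f in \<open>auto intro!: int\<close>)
    then show ?thesis unfolding G_def oint_def using False by simp
  qed
  have xi: "x \<in> {e..f}" using e f by auto
  have "((\<lambda>y. integral {e..y} g) has_real_derivative g x) (at x within {e..f})"
    by (rule integral_has_real_derivative[OF gc xi])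
  moreover have "x \<in> interior {e..f}" using e f by (simp add: interior_atLeastAtMost_real)
  ultimately have "((\<lambda>y. integral {e..y} g) has_real_derivative g x) (at x)"
    using at_within_interior by metis
  then have "(G has_real_derivative g x) (at x)" unfolding G_def[abs_def]
    by (auto intro!: derivative_eq_intros)
  then show ?thesis
    by (rule has_field_derivative_transform_within_open[where S="{e<..<f}"]) (use e f eq in auto)
qed

lemma Qpos: fixes \<alpha> x :: real shows "\<alpha> > 0 \<Longrightarrow> \<alpha>\<^sup>2 * (cos x)\<^sup>2 + (sin x)\<^sup>2 > 0"
proof -
  assume al: "\<alpha> > 0"
  show ?thesis
  proof (cases "cos x = 0")
    case True
    then have "(sin x)\<^sup>2 = 1" using sin_cos_squared_add[of x] by simp
    have "\<alpha>\<^sup>2 * (cos x)\<^sup>2 \<ge> 0" by simp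
    then show ?thesis using \<open>(sin x)\<^sup>2 = 1\<close> by linarith
  next
    case False
    then have "\<alpha>\<^sup>2 * (cos x)\<^sup>2 > 0" using al by simp
    then show ?thesis by (simp add: add_pos_nonneg)
  qed
qed

definition gq :: "real \<Rightarrow> real \<Rightarrow> real" where "gq \<alpha> \<tau> = 1 / sqrt (\<alpha>\<^sup>2 * (cos \<tau>)\<^sup>2 + (sin \<tau>)\<^sup>2)"

lemma hfun_oint: "hfun \<alpha> x = sqrt \<alpha> * oint (gq \<alpha>) x"
  unfolding hfun_def oint_def gq_def[abs_def] Let_def by simp

lemma gq_cont: assumes al: "\<alpha> > 0" shows "continuous_on UNIV (gq \<alpha>)"
proof -
  have "\<And>\<tau>. \<alpha>\<^sup>2 * (cos \<tau>)\<^sup>2 + (sin \<tau>)\<^sup>2 \<noteq> 0" using Qpos[OF al] by (metis less_irrefl)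
  then show ?thesis unfolding gq_def[abs_def] by (intro continuous_intros) auto
qed

lemma hfun_deriv: assumes "\<alpha> > 0" shows "(hfun \<alpha> has_real_derivative sqrt \<alpha> * gq \<alpha> x) (at x)"
proof -
  have "(oint (gq \<alpha>) has_real_derivative gq \<alpha> x) (at x)"
    by (rule oint_deriv[of "-(\<bar>x\<bar>+1)" "\<bar>x\<bar>+1"])
       (use continuous_on_subset[OF gq_cont[OF assms]] in auto)
  then show ?thesis unfolding hfun_oint[abs_def] by (rule DERIV_cmult)
qed

lemma hfun_inj: assumes "\<alpha> > 0" shows "inj (hfun \<alpha>)"
proof -
  have pos: "sqrt \<alpha> * gq \<alpha> x > 0" for x using Qpos[OF assms, of x] assms unfolding gq_def by simp
  have mono: "hfun \<alpha> x < hfun \<alpha> y" if "x < y" for x y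
    using DERIV_pos_imp_increasing[OF that] hfun_deriv[OF assms] pos by blast
  show ?thesis
  proof (rule injI)
    fix x y assume "hfun \<alpha> x = hfun \<alpha> y"
    then show "x = y" using mono[of x y] mono[of y x] by (cases x y rule: linorder_cases) auto
  qed
qed

locale zode =
  fixes a :: real and z z1 z2 :: "real \<Rightarrow> real"
  assumes a: "a > 0"
    and d: "\<forall>u\<in>{-a<..<a}. (z has_real_derivative z1 u) (at u) \<and> (z1 has_real_derivative z2 u) (at u)
              \<and> z2 u + 4 * sinh (z u) = 0"
begin

lemma dz: "u \<in> {-a<..<a} \<Longrightarrow> (z has_real_derivative z1 u) (at u)" using d by blast
lemma dz1: "u \<in> {-a<..<a} \<Longrightarrow> (z1 has_real_derivative z2 u) (at u)" using d by blast
lemma ode: "u \<in> {-a<..<a} \<Longrightarrow> z2 u = - 4 * sinh (z u)" using d by force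
lemma a0: "0 \<in> {-a<..<a}" using a by auto

definition "K = (z1 0)\<^sup>2 / 4 + 2 * cosh (z 0)"

lemma energy: assumes u: "u \<in> {-a<..<a}" shows "(z1 u)\<^sup>2 / 4 + 2 * cosh (z u) = K"
proof -
  have "((\<lambda>u. (z1 u)\<^sup>2 / 4 + 2 * cosh (z u)) has_real_derivative 0) (at x within {-a<..<a})"
    if x: "x \<in> {-a<..<a}" for x
  proof -
    have "((\<lambda>u. (z1 u)\<^sup>2 / 4 + 2 * cosh (z u)) has_real_derivative
        (2 * z1 x * z2 x / 4 + 2 * (sinh (z x) * z1 x))) (at x)"
      using dz[OF x] dz1[OF x] by (auto intro!: derivative_eq_intros simp: power2_eq_square)
    moreover have "2 * z1 x * z2 x / 4 + 2 * (sinh (z x) * z1 x) = 0" using ode[OF x] by simp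
    ultimately show ?thesis by (simp add: has_field_derivative_at_within)
  qed
  then obtain k where "\<forall>x\<in>{-a<..<a}. (z1 x)\<^sup>2 / 4 + 2 * cosh (z x) = k"
    using has_field_derivative_zero_constant[of "{-a<..<a}" "\<lambda>u. (z1 u)\<^sup>2 / 4 + 2 * cosh (z u)"] by auto
  then show ?thesis using u a0 unfolding K_def by auto
qed

lemma K2: "K \<ge> 2"
proof -
  have "(z1 0)\<^sup>2 / 4 \<ge> 0" by simp
  then show ?thesis unfolding K_def using cosh_real_ge_1[of "z 0"] by linarith
qed

definition "\<alpha> = (K + sqrt (K\<^sup>2 - 4)) / 2"

lemma alpha: "\<alpha> \<ge> 1" "\<alpha> > 0" "\<alpha> * K = \<alpha>\<^sup>2 + 1"
proof -
  have "2*2 \<le> K*K" using mult_mono[OF K2 K2] K2 by simp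
  then have k4: "0 \<le> K\<^sup>2 - 4" unfolding power2_eq_square by linarith
  have r: "(sqrt (K\<^sup>2 - 4))\<^sup>2 = K\<^sup>2 - 4" using k4 by (rule real_sqrt_pow2)
  have sq: "0 \<le> sqrt (K\<^sup>2 - 4)" using k4 by simp
  have "2 + 0 \<le> K + sqrt (K\<^sup>2 - 4)" by (rule add_mono[OF K2 sq])
  then show "\<alpha> \<ge> 1" unfolding \<alpha>_def by simp
  then show "\<alpha> > 0" by simp
  show "\<alpha> * K = \<alpha>\<^sup>2 + 1" unfolding \<alpha>_def using r by (simp add: power2_eq_square field_simps)
qed

definition "P u = exp (z u / 2)" for u
definition "P1 u = P u * z1 u / 2" for u
definition "P2 u = P1 u * z1 u / 2 + P u * z2 u / 2" for u

lemma dP: "u \<in> {-a<..<a} \<Longrightarrow> (P has_real_derivative P1 u) (at u)"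
  unfolding P_def[abs_def] P1_def P_def using dz by (auto intro!: derivative_eq_intros)

lemma dP1: assumes u: "u \<in> {-a<..<a}" shows "(P1 has_real_derivative P2 u) (at u)"
proof -
  have "((\<lambda>u. P u * z1 u / 2) has_real_derivative (P1 u * z1 u + P u * z2 u) / 2) (at u)"
    using DERIV_cdivide[OF DERIV_mult[OF dP[OF u] dz1[OF u]], of 2] by (simp add: mult.commute)
  then show ?thesis unfolding P1_def[abs_def] P2_def[symmetric] unfolding P2_def P1_def
    by (simp add: add_divide_distrib)
qed

lemma PP: "P u * P u = exp (z u)" unfolding P_def by (simp add: exp_add[symmetric])
lemma Ppos: "P u > 0" unfolding P_def by simp

lemma P2id: assumes u: "u \<in> {-a<..<a}" shows "\<alpha> * P2 u = (\<alpha>\<^sup>2 + 1) * P u - 2 * \<alpha> * (P u * P u * P u)"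
proof -
  have "P2 u = P u * ((z1 u)\<^sup>2 / 4 + z2 u / 2)" unfolding P2_def P1_def by (simp add: power2_eq_square field_simps)
  also have "\<dots> = P u * (K - 2 * cosh (z u) - 2 * sinh (z u))" using energy[OF u] ode[OF u] by simp
  also have "\<dots> = P u * (K - 2 * exp (z u))"
  proof -
    have "K - 2 * cosh (z u) - 2 * sinh (z u) = K - 2 * exp (z u)" using cosh_plus_sinh[of "z u"] by linarith
    then show ?thesis by simp
  qed
  finally have "P2 u = P u * K - 2 * (P u * P u * P u)" unfolding PP[symmetric] by (simp add: algebra_simps)
  then have "\<alpha> * P2 u = \<alpha> * (P u * K - 2 * (P u * P u * P u))" by simp
  then have "\<alpha> * P2 u = (\<alpha> * K) * P u - 2 * \<alpha> * (P u * P u * P u)" by (simp add: algebra_simps)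
  then show ?thesis using alpha(3) by simp
qed

lemma Pcont: "continuous_on {-a<..<a} P"
  by (rule continuous_at_imp_continuous_on) (use dP DERIV_isCont in blast)

lemma w0_exists: "\<exists>w0. \<alpha> * (P 0 * P 0) - (\<alpha>\<^sup>2 * (cos w0)\<^sup>2 + (sin w0)\<^sup>2) = 0
    \<and> \<alpha> * P1 0 - (1 - \<alpha>\<^sup>2) * (sin w0 * cos w0) = 0"
proof (cases "\<alpha> = 1")
  case True
  then have "K = 2" using alpha(3) by simp
  then have "(z1 0)\<^sup>2 / 4 + 2 * cosh (z 0) = 2" unfolding K_def by simp
  moreover have "(z1 0)\<^sup>2 / 4 \<ge> 0" "cosh (z 0) \<ge> 1" using cosh_real_ge_1 by auto
  ultimately have "(z1 0)\<^sup>2 / 4 = 0" "cosh (z 0) = 1" by linarith+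
  then have "z1 0 = 0" "cosh (z 0) = 1" by auto
  then have "z 0 = 0" "P1 0 = 0" unfolding P1_def by auto
  then show ?thesis using True PP[of 0] by (intro exI[of _ 0]) simp
next
  case False
  then have al: "\<alpha> > 1" using alpha(1) by simp
  define E where "E = exp (z 0)"
  have E: "E > 0" "P 0 * P 0 = E" unfolding E_def using PP by auto
  have ch: "cosh (z 0) = (E + 1/E) / 2" unfolding E_def cosh_def by (simp add: exp_minus inverse_eq_divide)
  define X where "X = (2 * \<alpha> * E - \<alpha>\<^sup>2 - 1) / (\<alpha>\<^sup>2 - 1)"
  define Y where "Y = 2 * \<alpha> * P1 0 / (1 - \<alpha>\<^sup>2)"
  have d0: "\<alpha>\<^sup>2 - 1 \<noteq> 0" "1 - \<alpha>\<^sup>2 \<noteq> 0" using al by (simp_all add: power2_eq_square) (smt (verit) mult_less_cancel_right2)+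
  have P1sq: "P1 0 * P1 0 = E * K - E * E - 1"
  proof -
    have "P1 0 * P1 0 = E * ((z1 0)\<^sup>2 / 4)" unfolding P1_def using E(2)[symmetric] by (simp add: power2_eq_square field_simps)
    also have "\<dots> = E * (K - (E + 1/E))"
    proof -
      have "2 * cosh (z 0) = E + 1/E" using ch by simp
      then have "(z1 0)\<^sup>2 / 4 = K - (E + 1/E)" using energy[OF a0] by linarith
      then show ?thesis by simp
    qed
    also have "\<dots> = E * K - E * E - 1" using E(1) by (simp add: field_simps)
    finally show ?thesis .
  qed
  have "X\<^sup>2 + Y\<^sup>2 = 1"
  proof -
    have "(2 * \<alpha> * E - \<alpha>\<^sup>2 - 1)\<^sup>2 + (2 * \<alpha> * P1 0)\<^sup>2 = (\<alpha>\<^sup>2 - 1)\<^sup>2"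
    proof -
      have "(2 * \<alpha> * P1 0)\<^sup>2 = 4*\<alpha>*\<alpha>*(P1 0 * P1 0)" by (simp add: power2_eq_square)
      also have "\<dots> = 4*\<alpha>*\<alpha>*(E*K - E*E - 1)" using P1sq by simp
      also have "\<dots> = 4 * \<alpha> * (E * (\<alpha> * K) - \<alpha> * E * E - \<alpha>)" by (simp add: algebra_simps)
      also have "\<dots> = 4 * \<alpha> * (E * (\<alpha>\<^sup>2 + 1) - \<alpha> * E * E - \<alpha>)" using alpha(3) by simp
      finally show ?thesis by (simp add: power2_eq_square algebra_simps)
    qed
    moreover have "(1 - \<alpha>\<^sup>2)\<^sup>2 = (\<alpha>\<^sup>2 - 1)\<^sup>2" by (simp add: power2_eq_square algebra_simps)
    ultimately show ?thesis unfolding X_def Y_def using d0 by (simp add: power_divide field_simps)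
  qed
  then obtain \<theta> where th: "X = cos \<theta>" "Y = sin \<theta>" using sincos_total_2pi by metis
  define w0 where "w0 = \<theta> / 2"
  have c2: "(cos w0)\<^sup>2 = (1 + X) / 2" using cos_double_cos[of w0] th unfolding w0_def by simp
  have s2: "(sin w0)\<^sup>2 = (1 - X) / 2" unfolding sin_squared_eq c2 by (simp add: field_simps)
  have sc: "sin w0 * cos w0 = Y / 2" using sin_double[of w0] th unfolding w0_def by simp
  show ?thesis
  proof (intro exI[of _ w0] conjI)
    have xx: "X * (\<alpha>\<^sup>2 - 1) = 2 * \<alpha> * E - \<alpha>\<^sup>2 - 1" unfolding X_def using d0 by simp
    have "\<alpha>\<^sup>2 * ((1 + X) / 2) + (1 - X) / 2 = (\<alpha>\<^sup>2 + 1) / 2 + X * (\<alpha>\<^sup>2 - 1) / 2"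
      by (simp add: algebra_simps add_divide_distrib diff_divide_distrib)
    then show "\<alpha> * (P 0 * P 0) - (\<alpha>\<^sup>2 * (cos w0)\<^sup>2 + (sin w0)\<^sup>2) = 0"
      unfolding c2 s2 E(2) xx by (simp add: field_simps)
    show "\<alpha> * P1 0 - (1 - \<alpha>\<^sup>2) * (sin w0 * cos w0) = 0"
      unfolding sc Y_def using d0 by (simp add: field_simps)
  qed
qed

end

context zode begin

definition "w0 = (SOME w0. \<alpha> * (P 0 * P 0) - (\<alpha>\<^sup>2 * (cos w0)\<^sup>2 + (sin w0)\<^sup>2) = 0
    \<and> \<alpha> * P1 0 - (1 - \<alpha>\<^sup>2) * (sin w0 * cos w0) = 0)"

lemma w0: "\<alpha> * (P 0 * P 0) - (\<alpha>\<^sup>2 * (cos w0)\<^sup>2 + (sin w0)\<^sup>2) = 0"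
  "\<alpha> * P1 0 - (1 - \<alpha>\<^sup>2) * (sin w0 * cos w0) = 0"
  using someI_ex[OF w0_exists] unfolding w0_def by blast+

definition "w u = w0 + oint P u" for u

lemma dw: "u \<in> {-a<..<a} \<Longrightarrow> (w has_real_derivative P u) (at u)"
  unfolding w_def[abs_def] using oint_deriv[OF Pcont a0]
  by (auto intro!: derivative_eq_intros)

lemma w_0: "w 0 = w0" unfolding w_def oint_def by simp

definition "f1 u = \<alpha> * (P u * P u) - (\<alpha>\<^sup>2 * (cos (w u))\<^sup>2 + (sin (w u))\<^sup>2)" for u
definition "f2 u = \<alpha> * P1 u - (1 - \<alpha>\<^sup>2) * (sin (w u) * cos (w u))" for u

lemma df1: assumes u: "u \<in> {-a<..<a}" shows "(f1 has_real_derivative (2 * P u * f2 u)) (at u)"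
proof -
  have "(f1 has_real_derivative (\<alpha> * (P1 u * P u + P u * P1 u)
      - (\<alpha>\<^sup>2 * (2 * cos (w u) * (- sin (w u) * P u)) + 2 * sin (w u) * (cos (w u) * P u)))) (at u)"
    unfolding f1_def[abs_def] using dP[OF u] dw[OF u]
    by (auto intro!: derivative_eq_intros simp: power2_eq_square)
  moreover have "\<alpha> * (P1 u * P u + P u * P1 u)
      - (\<alpha>\<^sup>2 * (2 * cos (w u) * (- sin (w u) * P u)) + 2 * sin (w u) * (cos (w u) * P u)) = 2 * P u * f2 u"
    unfolding f2_def by (simp add: algebra_simps power2_eq_square)
  ultimately show ?thesis by simp
qed

lemma df2: assumes u: "u \<in> {-a<..<a}" shows "(f2 has_real_derivative (- 2 * P u * f1 u)) (at u)"
proof -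
  have "(f2 has_real_derivative (\<alpha> * P2 u
      - (1 - \<alpha>\<^sup>2) * (cos (w u) * P u * cos (w u) + sin (w u) * (- sin (w u) * P u)))) (at u)"
    unfolding f2_def[abs_def] using dP1[OF u] dw[OF u]
    by (auto intro!: derivative_eq_intros simp: algebra_simps)
  moreover have "\<alpha> * P2 u
      - (1 - \<alpha>\<^sup>2) * (cos (w u) * P u * cos (w u) + sin (w u) * (- sin (w u) * P u)) = - 2 * P u * f1 u"
  proof -
    have sc: "sin (w u) * sin (w u) = 1 - cos (w u) * cos (w u)"
      using sin_cos_squared_add[of "w u"] by (simp add: power2_eq_square algebra_simps)
    have "\<alpha> * P2 u
      - (1 - \<alpha>\<^sup>2) * (cos (w u) * P u * cos (w u) + sin (w u) * (- sin (w u) * P u))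
      = (\<alpha>\<^sup>2 + 1) * P u - 2 * \<alpha> * (P u * P u * P u)
      - (1 - \<alpha>\<^sup>2) * P u * (cos (w u) * cos (w u) - sin (w u) * sin (w u))"
      unfolding P2id[OF u] by (simp add: algebra_simps)
    also have "\<dots> = - 2 * P u * f1 u"
      unfolding f1_def sc power2_eq_square by (simp add: algebra_simps)
    finally show ?thesis .
  qed
  ultimately show ?thesis by simp
qed

lemma f1_zero: assumes u: "u \<in> {-a<..<a}" shows "f1 u = 0"
proof -
  have "((\<lambda>u. (f1 u)\<^sup>2 + (f2 u)\<^sup>2) has_real_derivative 0) (at x within {-a<..<a})"
    if x: "x \<in> {-a<..<a}" for x
  proof -
    have "((\<lambda>u. (f1 u)\<^sup>2 + (f2 u)\<^sup>2) has_real_derivative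
       (2 * f1 x * (2 * P x * f2 x) + 2 * f2 x * (- 2 * P x * f1 x))) (at x)"
      using df1[OF x] df2[OF x] by (auto intro!: derivative_eq_intros simp: power2_eq_square)
    then show ?thesis by (simp add: has_field_derivative_at_within algebra_simps)
  qed
  then obtain k where k: "\<forall>x\<in>{-a<..<a}. (f1 x)\<^sup>2 + (f2 x)\<^sup>2 = k"
    using has_field_derivative_zero_constant[of "{-a<..<a}" "\<lambda>u. (f1 u)\<^sup>2 + (f2 u)\<^sup>2"] by auto
  have "f1 0 = 0" "f2 0 = 0" unfolding f1_def f2_def w_0 using w0 by auto
  then have "k = 0" using k a0 by auto
  then have "(f1 u)\<^sup>2 + (f2 u)\<^sup>2 = 0" using k u by auto
  then show ?thesis by (simp add: add_nonneg_eq_0_iff)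
qed

lemma z_eq: assumes u: "u \<in> {-a<..<a}"
  shows "z u = ln ((\<alpha>\<^sup>2 * (cos (w u))\<^sup>2 + (sin (w u))\<^sup>2) / \<alpha>)"
proof -
  have "\<alpha> * exp (z u) = \<alpha>\<^sup>2 * (cos (w u))\<^sup>2 + (sin (w u))\<^sup>2" using f1_zero[OF u] PP[of u] unfolding f1_def by simp
  then have "exp (z u) = (\<alpha>\<^sup>2 * (cos (w u))\<^sup>2 + (sin (w u))\<^sup>2) / \<alpha>" using alpha(2) by (simp add: field_simps)
  then show ?thesis by (metis ln_exp)
qed

lemma hw: assumes u: "u \<in> {-a<..<a}" shows "hfun \<alpha> (w u) = u + hfun \<alpha> w0"
proof -
  have "((\<lambda>u. hfun \<alpha> (w u) - u) has_real_derivative 0) (at x within {-a<..<a})"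
    if x: "x \<in> {-a<..<a}" for x
  proof -
    have "((\<lambda>u. hfun \<alpha> (w u) - u) has_real_derivative (sqrt \<alpha> * gq \<alpha> (w x) * P x - 1)) (at x)"
      by (intro DERIV_diff DERIV_chain2[OF hfun_deriv[OF alpha(2)] dw[OF x]] DERIV_ident)
    moreover have "sqrt \<alpha> * gq \<alpha> (w x) * P x = 1"
    proof -
      have "\<alpha>\<^sup>2 * (cos (w x))\<^sup>2 + (sin (w x))\<^sup>2 = \<alpha> * (P x * P x)" using f1_zero[OF x] unfolding f1_def by simp
      then have "gq \<alpha> (w x) = 1 / (sqrt \<alpha> * P x)"
        unfolding gq_def using Ppos[of x] alpha(2) by (simp add: real_sqrt_mult)
      then show ?thesis using Ppos[of x] alpha(2) by simp
    qed
    ultimately show ?thesis by (simp add: has_field_derivative_at_within)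
  qed
  then obtain k where k: "\<forall>x\<in>{-a<..<a}. hfun \<alpha> (w x) - x = k"
    using has_field_derivative_zero_constant[of "{-a<..<a}" "\<lambda>u. hfun \<alpha> (w u) - u"] by auto
  then have "hfun \<alpha> (w u) - u = hfun \<alpha> (w 0) - 0" using u a0 by metis
  then show ?thesis using w_0 by simp
qed

lemma z_rep: "\<exists>\<alpha> u0. \<alpha> > 0 \<and> (\<forall>u\<in>{-a<..<a}.
            z u = ln ((\<alpha>\<^sup>2 * (cos (inv (hfun \<alpha>) (u + u0)))\<^sup>2 + (sin (inv (hfun \<alpha>) (u + u0)))\<^sup>2) / \<alpha>))"
proof (intro exI conjI ballI)
  show "\<alpha> > 0" by (rule alpha(2))
  fix u assume u: "u \<in> {-a<..<a}"
  have "inv (hfun \<alpha>) (u + hfun \<alpha> w0) = w u"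
    unfolding hw[OF u, symmetric] using inv_f_f[OF hfun_inj[OF alpha(2)]] by simp
  then show "z u = ln ((\<alpha>\<^sup>2 * (cos (inv (hfun \<alpha>) (u + hfun \<alpha> w0)))\<^sup>2 + (sin (inv (hfun \<alpha>) (u + hfun \<alpha> w0)))\<^sup>2) / \<alpha>)"
    using z_eq[OF u] by simp
qed

end

theorem theorem2p4:
  fixes l n :: "real \<Rightarrow> real \<Rightarrow> real^4" and E :: "real \<Rightarrow> real" and a b :: real
    and z :: "real \<Rightarrow> real" and s t \<beta> :: real
  defines "z \<equiv> (\<lambda>u. ln (E u))"
      and "s \<equiv> z 0"
      and "t \<equiv> deriv z 0 / 2"
      and "\<beta> \<equiv> sqrt (t\<^sup>2 + 2 * cosh s)"
  assumes ab: "a > 0" "b > 0"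
    and regular: "\<forall>u\<in>{-a<..<a}. E u > 0"
    and smooth: "smooth2 ({-a<..<a} \<times> {-b<..<b}) l"
    and first_ff: "\<forall>(u,v)\<in>{-a<..<a} \<times> {-b<..<b}.
          pu l u v \<bullet> pu l u v = E u \<and> pv l u v \<bullet> pv l u v = E u \<and>
          pu l u v \<bullet> pv l u v = 0 \<and> l u v \<bullet> l u v = 1"
    and normal: "\<forall>(u,v)\<in>{-a<..<a} \<times> {-b<..<b}.
          n u v \<bullet> n u v = 1 \<and> n u v \<bullet> l u v = 0 \<and> n u v \<bullet> pu l u v = 0 \<and> n u v \<bullet> pv l u v = 0"
    and second_ff: "\<forall>(u,v)\<in>{-a<..<a} \<times> {-b<..<b}.
          pu (pu l) u v \<bullet> n u v = 1 \<and> pv (pu l) u v \<bullet> n u v = 0 \<and> pv (pv l) u v \<bullet> n u v = -1"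
    and minimal: "\<forall>(u,v)\<in>{-a<..<a} \<times> {-b<..<b}. mean_curvature l n u v = 0"
    and circles: "\<forall>u\<in>{-a<..<a}. is_circle (\<lambda>v. l u v) {-b<..<b}"
    and nonconst: "\<not> (\<exists>c. \<forall>(u,v)\<in>{-a<..<a} \<times> {-b<..<b}. gauss_curvature l n u v = c)"
    and init: "l 0 0 = e1" "pu l 0 0 = sqrt (E 0) *\<^sub>R e2" "pv l 0 0 = sqrt (E 0) *\<^sub>R e3" "n 0 0 = e4"
  shows "(\<forall>u\<in>{-a<..<a}. (z has_real_derivative deriv z u) (at u) \<and>
            (deriv z has_real_derivative deriv (deriv z) u) (at u) \<and>
            deriv (deriv z) u + 4 * sinh (z u) = 0)
       \<and> z 0 = s \<and> deriv z 0 = 2 * t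
       \<and> (\<exists>\<alpha> u0. \<alpha> > 0 \<and> (\<forall>u\<in>{-a<..<a}.
            z u = ln ((\<alpha>\<^sup>2 * (cos (inv (hfun \<alpha>) (u + u0)))\<^sup>2 + (sin (inv (hfun \<alpha>) (u + u0)))\<^sup>2) / \<alpha>)))
       \<and> (\<exists>p p1 p2 :: real \<Rightarrow> real^4.
            (\<forall>u\<in>{-a<..<a}. (p has_vector_derivative p1 u) (at u) \<and>
                (p1 has_vector_derivative p2 u) (at u) \<and>
                p2 u + deriv z u *\<^sub>R p1 u + \<beta>\<^sup>2 *\<^sub>R p u = 0)
          \<and> p 0 = (1 / \<beta>\<^sup>2) *\<^sub>R ((exp (- s / 2) * (t\<^sup>2 + exp (- s))) *\<^sub>R e1 - t *\<^sub>R e2 - exp (- s / 2) *\<^sub>R e4)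
          \<and> p1 0 = (- t * exp (- s / 2)) *\<^sub>R e1 + e2
          \<and> (\<forall>(u,v)\<in>{-a<..<a} \<times> {-b<..<b}.
               l u v = exp (z u / 2) *\<^sub>R p u
                 + (exp (z u / 2) / \<beta>\<^sup>2) *\<^sub>R
                     (cos (\<beta> * v) *\<^sub>R (exp (s / 2) *\<^sub>R e1 + t *\<^sub>R e2 + exp (- s / 2) *\<^sub>R e4)
                      + (\<beta> * sin (\<beta> * v)) *\<^sub>R e3)))"
  proof -
  have zdef: "z = (\<lambda>u. ln (E u))" using assms(1) by simp
  have sdef: "s = z 0" using assms(2) by simp
  have tdef: "t = deriv z 0 / 2" using assms(3) by simp
  have bdef: "\<beta> = sqrt (t\<^sup>2 + 2 * cosh s)" using assms(4) by simp
  obtain S where S: "l \<in> S" "\<forall>g\<in>S. continuous_on ({-a<..<a} \<times> {-b<..<b}) (case_prod g) \<and>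
      (\<exists>gu\<in>S. \<forall>(u,v)\<in>{-a<..<a} \<times> {-b<..<b}. ((\<lambda>x. g x v) has_vector_derivative gu u v) (at u)) \<and>
      (\<exists>gv\<in>S. \<forall>(u,v)\<in>{-a<..<a} \<times> {-b<..<b}. ((\<lambda>y. g u y) has_vector_derivative gv u v) (at v))"
    using smooth unfolding smooth2_def by blast
  interpret G: geo0 a b S l n E
  proof unfold_locales
    show "fam.C a b S l" unfolding fam.C_def[OF fam.intro[OF ab(1) ab(2) S(2)]] using S(1) by blast
  qed (use ab S regular first_ff normal second_ff init in auto)
  have I: "u \<in> {-a<..<a} \<Longrightarrow> (z has_real_derivative 2 * G.c u) (at u)" for u
  proof -
    assume u: "u \<in> {-a<..<a}"
    have "((\<lambda>u. ln (E u)) has_real_derivative (1 / E u * G.Ed u)) (at u)"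
      using G.E_deriv[OF u] G.Ex_pos[OF u] by (auto intro!: derivative_eq_intros)
    then show ?thesis unfolding zdef G.c_def using G.Ex_pos[OF u] by simp
  qed
  have dz: "u \<in> {-a<..<a} \<Longrightarrow> deriv z u = 2 * G.c u" for u using I DERIV_imp_deriv by blast
  have II: "u \<in> {-a<..<a} \<Longrightarrow> (deriv z has_real_derivative 2 * G.cd u) (at u)" for u
  proof -
    assume u: "u \<in> {-a<..<a}"
    have "((\<lambda>u. 2 * G.c u) has_real_derivative 2 * G.cd u) (at u)"
      by (rule DERIV_cmult[OF G.c_deriv[OF u]])
    then show ?thesis
      by (rule has_field_derivative_transform_within_open[where S="{-a<..<a}"]) (use u dz in auto)
  qed
  have ddz: "u \<in> {-a<..<a} \<Longrightarrow> deriv (deriv z) u = 2 * G.cd u" for u using II DERIV_imp_deriv by blast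
  have part1: "\<forall>u\<in>{-a<..<a}. (z has_real_derivative deriv z u) (at u) \<and>
            (deriv z has_real_derivative deriv (deriv z) u) (at u) \<and>
            deriv (deriv z) u + 4 * sinh (z u) = 0"
  proof
    fix u assume u: "u \<in> {-a<..<a}"
    have Eu: "E u > 0" using G.Ex_pos[OF u] .
    have sh: "sinh (z u) = (E u - 1 / E u) / 2"
      unfolding zdef sinh_def using Eu by (simp add: exp_minus inverse_eq_divide)
    have "deriv (deriv z) u + 4 * sinh (z u) = 0"
      unfolding ddz[OF u] sh G.cdx[OF u] by (simp add: field_simps)
    then show "(z has_real_derivative deriv z u) (at u) \<and>
            (deriv z has_real_derivative deriv (deriv z) u) (at u) \<and>
            deriv (deriv z) u + 4 * sinh (z u) = 0"
      using I[OF u] II[OF u] dz[OF u] ddz[OF u] by simp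
  qed
  have part2: "\<exists>\<alpha> u0. \<alpha> > 0 \<and> (\<forall>u\<in>{-a<..<a}.
            z u = ln ((\<alpha>\<^sup>2 * (cos (inv (hfun \<alpha>) (u + u0)))\<^sup>2 + (sin (inv (hfun \<alpha>) (u + u0)))\<^sup>2) / \<alpha>))"
  proof -
    interpret Z: zode a z "deriv z" "deriv (deriv z)"
      by unfold_locales (use ab(1) part1 in auto)
    show ?thesis by (rule Z.z_rep)
  qed
  have s0: "s = G.s0" unfolding sdef zdef G.s0_def by simp
  have t0: "t = G.t0" unfolding tdef G.t0_def using dz[OF G.a0] by simp
  have b0: "\<beta> = G.\<beta>"
  proof -
    have "2 * cosh G.s0 = G.q * G.q + 1 / (G.q * G.q)"
      unfolding cosh_def using G.q by (simp add: field_simps)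
    then show ?thesis unfolding bdef G.\<beta>_def G.Bq0 s0 t0 by simp
  qed
  have b2: "\<beta>\<^sup>2 = G.\<beta> * G.\<beta>" unfolding b0 by (simp add: power2_eq_square)
  have part3: "\<exists>p p1 p2 :: real \<Rightarrow> real^4.
            (\<forall>u\<in>{-a<..<a}. (p has_vector_derivative p1 u) (at u) \<and>
                (p1 has_vector_derivative p2 u) (at u) \<and>
                p2 u + deriv z u *\<^sub>R p1 u + \<beta>\<^sup>2 *\<^sub>R p u = 0)
          \<and> p 0 = (1 / \<beta>\<^sup>2) *\<^sub>R ((exp (- s / 2) * (t\<^sup>2 + exp (- s))) *\<^sub>R e1 - t *\<^sub>R e2 - exp (- s / 2) *\<^sub>R e4)
          \<and> p1 0 = (- t * exp (- s / 2)) *\<^sub>R e1 + e2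
          \<and> (\<forall>(u,v)\<in>{-a<..<a} \<times> {-b<..<b}.
               l u v = exp (z u / 2) *\<^sub>R p u
                 + (exp (z u / 2) / \<beta>\<^sup>2) *\<^sub>R
                     (cos (\<beta> * v) *\<^sub>R (exp (s / 2) *\<^sub>R e1 + t *\<^sub>R e2 + exp (- s / 2) *\<^sub>R e4)
                      + (\<beta> * sin (\<beta> * v)) *\<^sub>R e3))"
  proof -
    have c1: "\<forall>u\<in>{-a<..<a}. (G.pp has_vector_derivative G.pp1 u) (at u) \<and> (G.pp1 has_vector_derivative G.pp2 u) (at u) \<and>
          G.pp2 u + deriv z u *\<^sub>R G.pp1 u + \<beta>\<^sup>2 *\<^sub>R G.pp u = 0"
    proof
      fix u assume u: "u \<in> {-a<..<a}"
      show "(G.pp has_vector_derivative G.pp1 u) (at u) \<and> (G.pp1 has_vector_derivative G.pp2 u) (at u) \<and>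
          G.pp2 u + deriv z u *\<^sub>R G.pp1 u + \<beta>\<^sup>2 *\<^sub>R G.pp u = 0"
        using G.dpp[OF u] G.dpp1[OF u] G.ode_pp[OF u] unfolding dz[OF u] b2 by simp
    qed
    have c2: "G.pp 0 = (1 / \<beta>\<^sup>2) *\<^sub>R ((exp (- s / 2) * (t\<^sup>2 + exp (- s))) *\<^sub>R e1 - t *\<^sub>R e2 - exp (- s / 2) *\<^sub>R e4)"
      unfolding s0 t0 b0 by (rule G.pp0)
    have c3: "G.pp1 0 = (- t * exp (- s / 2)) *\<^sub>R e1 + e2"
      unfolding s0 t0 by (rule G.pp10)
    have c4: "\<forall>(u,v)\<in>{-a<..<a} \<times> {-b<..<b}.
               l u v = exp (z u / 2) *\<^sub>R G.pp u
                 + (exp (z u / 2) / \<beta>\<^sup>2) *\<^sub>R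
                     (cos (\<beta> * v) *\<^sub>R (exp (s / 2) *\<^sub>R e1 + t *\<^sub>R e2 + exp (- s / 2) *\<^sub>R e4)
                      + (\<beta> * sin (\<beta> * v)) *\<^sub>R e3)"
    proof (clarify)
      fix u v assume uv: "u \<in> {-a<..<a}" "v \<in> {-b<..<b}"
      show "l u v = exp (z u / 2) *\<^sub>R G.pp u
                 + (exp (z u / 2) / \<beta>\<^sup>2) *\<^sub>R
                     (cos (\<beta> * v) *\<^sub>R (exp (s / 2) *\<^sub>R e1 + t *\<^sub>R e2 + exp (- s / 2) *\<^sub>R e4)
                      + (\<beta> * sin (\<beta> * v)) *\<^sub>R e3)"
        using G.lform[of u v] uv unfolding zdef s0 t0 b0 by simp
    qed
    show ?thesis using c1 c2 c3 c4 by blast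
  qed
  have e1: "z 0 = s" using sdef by simp
  have e2: "deriv z 0 = 2 * t" using tdef by simp
  show ?thesis
    using part1 part2 part3 e1 e2 by blast
qed

end
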